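(* For a Cartesian left additive category $\mathbb{X}$, the category $\mathcal{D}[\mathbb{X}]$ of $\mathsf{D}$-sequences is a Cartesian differential category whose differential combinator is $\mathsf{D}[f_\bullet]_n=f_{n+1}$ (equivalently, the combinator $\mathsf{D}^\delta[f_\bullet]=\delta(f_\bullet)_1$ induced by the comultiplication $\delta$ equals $\mathsf{D}[f_\bullet]$). Furthermore, the induced tangent functor of $\mathcal{D}[\mathbb{X}]$, given on objects by $A\mapsto A\times A$ and on maps by $f_\bullet\mapsto\langle (i_\bullet\cdot\pi_0)\ast f_\bullet,\mathsf{D}[f_\bullet]\rangle$, coincides with $f_\bullet\mapsto\mathsf{T}(f_\bullet)$, where $\mathsf{T}(f_\bullet)_n=\langle\mathsf{P}^n(\pi_0)f_n,f_{n+1}\rangle$.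
   Context: Composition is in diagrammatic order. A left additive category: hom-sets commutative monoids with $f(g+h)=fg+fh$, $f0=0$; $h$ additive if $(f+g)h=fh+gh$, $0h=0$. A Cartesian left additive category: left additive with finite products and additive projections. A Cartesian differential category is a Cartesian left additive category with a combinator $\mathsf{D}$, $f:A\to B\mapsto\mathsf{D}[f]:A\times A\to B$, satisfying: [CD.1] $\mathsf{D}[f+g]=\mathsf{D}[f]+\mathsf{D}[g]$, $\mathsf{D}[0]=0$; [CD.2] $(1\times(\pi_0+\pi_1))\mathsf{D}[f]=(1\times\pi_0)\mathsf{D}[f]+(1\times\pi_1)\mathsf{D}[f]$, $\langle1,0\rangle\mathsf{D}[f]=0$; [CD.3] $\mathsf{D}[1]=\pi_1$, $\mathsf{D}[\pi_j]=\pi_1\pi_j$; [CD.4] $\mathsf{D}[\langle f,g\rangle]=\langle\mathsf{D}[f],\mathsf{D}[g]\rangle$; [CD.5] $\mathsf{D}[fg]=\langle\pi_0f,\mathsf{D}[f]\rangle\mathsf{D}[g]$; [CD.6] $\ell\mathsf{D}[\mathsf{D}[f]]=\mathsf{D}[f]$, $\ell=\langle1,0\rangle\times\langle0,1\rangle:A\times A\to(A\times A)\times(A\times A)$; [CD.7] $c\mathsf{D}[\mathsf{D}[f]]=\mathsf{D}[\mathsf{D}[f]]$, $c=\langle\langle\pi_0\pi_0,\pi_1\pi_0\rangle,\langle\pi_0\pi_1,\pi_1\pi_1\rangle\rangle$ (swap of the middle components of $(A\times A)\times(A\times A)$). Let $\mathsf{P}(A)=A\times A$, $\mathsf{P}(f)=f\times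 f$. A pre-$\mathsf{D}$-sequence $f_\bullet:A\to B$ is $(f_0,f_1,\dots)$ with $f_n:\mathsf{P}^n(A)\to B$. $(h\cdot f_\bullet)_n=\mathsf{P}^n(h)f_n$, $(f_\bullet\cdot k)_n=f_nk$. $\mathsf{T}(f_\bullet):\mathsf{P}(A)\to\mathsf{P}(B)$ with $\mathsf{T}(f_\bullet)_n=\langle\mathsf{P}^n(\pi_0)f_n,f_{n+1}\rangle$; $\mathsf{D}[f_\bullet]:\mathsf{P}(A)\to B$ with $\mathsf{D}[f_\bullet]_n=f_{n+1}$. Identity: $i_0=1$, $i_n=\pi_1\cdots\pi_1$ ($n$ times). Composition: $(f_\bullet\ast g_\bullet)_n=\mathsf{T}^n(f_\bullet)_0g_n$. Products in sequences: projections $i_\bullet\cdot\pi_j$, pairing $\langle f_\bullet,g_\bullet\rangle_n=\langle f_n,g_n\rangle$, terminal object of $\mathbb{X}$; sums and zero pointwise. A $\mathsf{D}$-sequence is a pre-$\mathsf{D}$-sequence with, for all $n$: $\langle1,0\rangle\cdot\mathsf{D}^{n+1}[f_\bullet]=0_\bullet$; $(1\times(\pi_0+\pi_1))\cdot\mathsf{D}^{n+1}[f_\bullet]=(1\times\pi_0)\cdot\mathsf{D}^{n+1}[f_\bullet]+(1\times\pi_1)\cdot\mathsf{D}^{n+1}[f_\bullet]$; $\ell\cdot\mathsf{D}^{n+2}[f_\bullet]=\mathsf{D}^{n+1}[f_\bullet]$; $c\cdot\mathsf{D}^{n+2}[f_\bullet]=\mathsf{D}^{n+2}[f_\bullet]$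 (maps $\langle1,0\rangle,1\times\pi_j,\ell,c$ taken for the object $\mathsf{P}^n(A)$). $\mathcal{D}[\mathbb{X}]$ is the category of $\mathsf{D}$-sequences with this structure. The comultiplication $\delta:\mathcal{D}[\mathbb{X}]\to\mathcal{D}[\mathcal{D}[\mathbb{X}]]$ sends $f_\bullet$ to the sequence with $0$-th term $f_\bullet$ and $n$-th term $\mathsf{D}^n[f_\bullet]$. *)

theory Defs
  imports Main
begin

text \<open>A category with chosen binary products, terminal object, and hom-wise
sums/zeros. c_comp f g means "first f, then g".\<close>

record ('o, 'm) cat_data =
  c_obj  :: "'o set"
  c_arr  :: "'m set"
  c_dom  :: "'m \<Rightarrow> 'o"
  c_cod  :: "'m \<Rightarrow> 'o"
  c_id   :: "'o \<Rightarrow> 'm"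
  c_comp :: "'m \<Rightarrow> 'm \<Rightarrow> 'm"
  c_plus :: "'m \<Rightarrow> 'm \<Rightarrow> 'm"
  c_zero :: "'o \<Rightarrow> 'o \<Rightarrow> 'm"
  c_prod :: "'o \<Rightarrow> 'o \<Rightarrow> 'o"
  c_p0   :: "'o \<Rightarrow> 'o \<Rightarrow> 'm"
  c_p1   :: "'o \<Rightarrow> 'o \<Rightarrow> 'm"
  c_pair :: "'m \<Rightarrow> 'm \<Rightarrow> 'm"
  c_term :: "'o"
  c_bang :: "'o \<Rightarrow> 'm"

definition hom :: "('o, 'm) cat_data \<Rightarrow> 'o \<Rightarrow> 'o \<Rightarrow> 'm set" where
  "hom X A B = {f \<in> c_arr X. c_dom X f = A \<and> c_cod X f = B}"

definition is_category :: "('o, 'm) cat_data \<Rightarrow> bool" where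
  "is_category X \<longleftrightarrow>
     (\<forall>f\<in>c_arr X. c_dom X f \<in> c_obj X \<and> c_cod X f \<in> c_obj X) \<and>
     (\<forall>A\<in>c_obj X. c_id X A \<in> hom X A A) \<and>
     (\<forall>A B D f g. f \<in> hom X A B \<longrightarrow> g \<in> hom X B D \<longrightarrow> c_comp X f g \<in> hom X A D) \<and>
     (\<forall>A B f. f \<in> hom X A B \<longrightarrow> c_comp X (c_id X A) f = f \<and> c_comp X f (c_id X B) = f) \<and>
     (\<forall>A B D E f g h. f \<in> hom X A B \<longrightarrow> g \<in> hom X B D \<longrightarrow> h \<in> hom X D E \<longrightarrow>
        c_comp X (c_comp X f g) h = c_comp X f (c_comp X g h))"

definition is_left_additive :: "('o, 'm) cat_data \<Rightarrow> bool" where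
  "is_left_additive X \<longleftrightarrow> is_category X \<and>
     (\<forall>A\<in>c_obj X. \<forall>B\<in>c_obj X. c_zero X A B \<in> hom X A B) \<and>
     (\<forall>A B f g. f \<in> hom X A B \<longrightarrow> g \<in> hom X A B \<longrightarrow> c_plus X f g \<in> hom X A B) \<and>
     (\<forall>A B f g h. f \<in> hom X A B \<longrightarrow> g \<in> hom X A B \<longrightarrow> h \<in> hom X A B \<longrightarrow>
        c_plus X (c_plus X f g) h = c_plus X f (c_plus X g h)) \<and>
     (\<forall>A B f g. f \<in> hom X A B \<longrightarrow> g \<in> hom X A B \<longrightarrow> c_plus X f g = c_plus X g f) \<and>
     (\<forall>A B f. f \<in> hom X A B \<longrightarrow> c_plus X f (c_zero X A B) = f) \<and>
     (\<forall>A B D f g h. f \<in> hom X A B \<longrightarrow> g \<in> hom X B D \<longrightarrow> h \<in> hom X B D \<longrightarrow>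
        c_comp X f (c_plus X g h) = c_plus X (c_comp X f g) (c_comp X f h)) \<and>
     (\<forall>A B D f. f \<in> hom X A B \<longrightarrow> D \<in> c_obj X \<longrightarrow> c_comp X f (c_zero X B D) = c_zero X A D)"

definition is_additive :: "('o, 'm) cat_data \<Rightarrow> 'm \<Rightarrow> bool" where
  "is_additive X h \<longleftrightarrow>
     (\<forall>A f g. f \<in> hom X A (c_dom X h) \<longrightarrow> g \<in> hom X A (c_dom X h) \<longrightarrow>
        c_comp X (c_plus X f g) h = c_plus X (c_comp X f h) (c_comp X g h)) \<and>
     (\<forall>A\<in>c_obj X. c_comp X (c_zero X A (c_dom X h)) h = c_zero X A (c_cod X h))"

definition is_cartesian_left_additive :: "('o, 'm) cat_data \<Rightarrow> bool" where
  "is_cartesian_left_additive X \<longleftrightarrow> is_left_additive X \<and>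
     c_term X \<in> c_obj X \<and>
     (\<forall>A\<in>c_obj X. c_bang X A \<in> hom X A (c_term X) \<and> (\<forall>h\<in>hom X A (c_term X). h = c_bang X A)) \<and>
     (\<forall>A\<in>c_obj X. \<forall>B\<in>c_obj X. c_prod X A B \<in> c_obj X \<and>
        c_p0 X A B \<in> hom X (c_prod X A B) A \<and> c_p1 X A B \<in> hom X (c_prod X A B) B \<and>
        is_additive X (c_p0 X A B) \<and> is_additive X (c_p1 X A B)) \<and>
     (\<forall>A B D f g. A \<in> c_obj X \<longrightarrow> B \<in> c_obj X \<longrightarrow> f \<in> hom X D A \<longrightarrow> g \<in> hom X D B \<longrightarrow>
        c_pair X f g \<in> hom X D (c_prod X A B) \<and>
        c_comp X (c_pair X f g) (c_p0 X A B) = f \<and> c_comp X (c_pair X f g) (c_p1 X A B) = g) \<and>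
     (\<forall>A B D h. A \<in> c_obj X \<longrightarrow> B \<in> c_obj X \<longrightarrow> h \<in> hom X D (c_prod X A B) \<longrightarrow>
        c_pair X (c_comp X h (c_p0 X A B)) (c_comp X h (c_p1 X A B)) = h)"

definition cross :: "('o, 'm) cat_data \<Rightarrow> 'm \<Rightarrow> 'm \<Rightarrow> 'm" where
  "cross X f g = c_pair X (c_comp X (c_p0 X (c_dom X f) (c_dom X g)) f)
                          (c_comp X (c_p1 X (c_dom X f) (c_dom X g)) g)"

definition ell :: "('o, 'm) cat_data \<Rightarrow> 'o \<Rightarrow> 'm" where
  "ell X A = cross X (c_pair X (c_id X A) (c_zero X A A)) (c_pair X (c_zero X A A) (c_id X A))"

definition cmid :: "('o, 'm) cat_data \<Rightarrow> 'o \<Rightarrow> 'm" where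
  "cmid X A = (let AA = c_prod X A A; q = c_p0 X AA AA; r = c_p1 X AA AA in
     c_pair X (c_pair X (c_comp X q (c_p0 X A A)) (c_comp X r (c_p0 X A A)))
              (c_pair X (c_comp X q (c_p1 X A A)) (c_comp X r (c_p1 X A A))))"

definition is_cartesian_differential :: "('o, 'm) cat_data \<Rightarrow> ('m \<Rightarrow> 'm) \<Rightarrow> bool" where
  "is_cartesian_differential X D \<longleftrightarrow> is_cartesian_left_additive X \<and>
     (\<forall>A B f. f \<in> hom X A B \<longrightarrow> D f \<in> hom X (c_prod X A A) B) \<and>
     \<comment> \<open>CD.1\<close>
     (\<forall>A B f g. f \<in> hom X A B \<longrightarrow> g \<in> hom X A B \<longrightarrow> D (c_plus X f g) = c_plus X (D f) (D g)) \<and>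
     (\<forall>A\<in>c_obj X. \<forall>B\<in>c_obj X. D (c_zero X A B) = c_zero X (c_prod X A A) B) \<and>
     \<comment> \<open>CD.2\<close>
     (\<forall>A B f. f \<in> hom X A B \<longrightarrow>
        c_comp X (cross X (c_id X A) (c_plus X (c_p0 X A A) (c_p1 X A A))) (D f) =
        c_plus X (c_comp X (cross X (c_id X A) (c_p0 X A A)) (D f))
                 (c_comp X (cross X (c_id X A) (c_p1 X A A)) (D f))) \<and>
     (\<forall>A B f. f \<in> hom X A B \<longrightarrow> c_comp X (c_pair X (c_id X A) (c_zero X A A)) (D f) = c_zero X A B) \<and>
     \<comment> \<open>CD.3\<close>
     (\<forall>A\<in>c_obj X. D (c_id X A) = c_p1 X A A) \<and>
     (\<forall>A\<in>c_obj X. \<forall>B\<in>c_obj X.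
        D (c_p0 X A B) = c_comp X (c_p1 X (c_prod X A B) (c_prod X A B)) (c_p0 X A B) \<and>
        D (c_p1 X A B) = c_comp X (c_p1 X (c_prod X A B) (c_prod X A B)) (c_p1 X A B)) \<and>
     \<comment> \<open>CD.4\<close>
     (\<forall>A B E f g. f \<in> hom X A B \<longrightarrow> g \<in> hom X A E \<longrightarrow> D (c_pair X f g) = c_pair X (D f) (D g)) \<and>
     \<comment> \<open>CD.5\<close>
     (\<forall>A B E f g. f \<in> hom X A B \<longrightarrow> g \<in> hom X B E \<longrightarrow>
        D (c_comp X f g) = c_comp X (c_pair X (c_comp X (c_p0 X A A) f) (D f)) (D g)) \<and>
     \<comment> \<open>CD.6\<close>
     (\<forall>A B f. f \<in> hom X A B \<longrightarrow> c_comp X (ell X A) (D (D f)) = D f) \<and>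
     \<comment> \<open>CD.7\<close>
     (\<forall>A B f. f \<in> hom X A B \<longrightarrow> c_comp X (cmid X A) (D (D f)) = D (D f))"

definition Pn :: "('o, 'm) cat_data \<Rightarrow> nat \<Rightarrow> 'o \<Rightarrow> 'o" where
  "Pn X n A = ((\<lambda>C. c_prod X C C) ^^ n) A"

definition Pmap :: "('o, 'm) cat_data \<Rightarrow> nat \<Rightarrow> 'm \<Rightarrow> 'm" where
  "Pmap X n h = ((\<lambda>k. cross X k k) ^^ n) h"

primrec idseq :: "('o, 'm) cat_data \<Rightarrow> 'o \<Rightarrow> nat \<Rightarrow> 'm" where
  "idseq X A 0 = c_id X A"
| "idseq X A (Suc n) = c_comp X (c_p1 X (Pn X n A) (Pn X n A)) (idseq X A n)"

definition seq_pre :: "('o, 'm) cat_data \<Rightarrow> 'm \<Rightarrow> (nat \<Rightarrow> 'm) \<Rightarrow> nat \<Rightarrow> 'm" where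
  "seq_pre X h f = (\<lambda>n. c_comp X (Pmap X n h) (f n))"

definition seq_post :: "('o, 'm) cat_data \<Rightarrow> (nat \<Rightarrow> 'm) \<Rightarrow> 'm \<Rightarrow> nat \<Rightarrow> 'm" where
  "seq_post X f k = (\<lambda>n. c_comp X (f n) k)"

definition Dop :: "(nat \<Rightarrow> 'm) \<Rightarrow> nat \<Rightarrow> 'm" where
  "Dop f = (\<lambda>n. f (Suc n))"

definition Tseq :: "('o, 'm) cat_data \<Rightarrow> (nat \<Rightarrow> 'm) \<Rightarrow> nat \<Rightarrow> 'm" where
  "Tseq X f = (let A = c_dom X (f 0) in
     (\<lambda>n. c_pair X (c_comp X (Pmap X n (c_p0 X A A)) (f n)) (f (Suc n))))"

definition seq_comp :: "('o, 'm) cat_data \<Rightarrow> (nat \<Rightarrow> 'm) \<Rightarrow> (nat \<Rightarrow> 'm) \<Rightarrow> nat \<Rightarrow> 'm" where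
  "seq_comp X f g = (\<lambda>n. c_comp X ((Tseq X ^^ n) f 0) (g n))"

definition seq_zero :: "('o, 'm) cat_data \<Rightarrow> 'o \<Rightarrow> 'o \<Rightarrow> nat \<Rightarrow> 'm" where
  "seq_zero X A B = (\<lambda>n. c_zero X (Pn X n A) B)"

definition seq_plus :: "('o, 'm) cat_data \<Rightarrow> (nat \<Rightarrow> 'm) \<Rightarrow> (nat \<Rightarrow> 'm) \<Rightarrow> nat \<Rightarrow> 'm" where
  "seq_plus X f g = (\<lambda>n. c_plus X (f n) (g n))"

definition is_pre_Dseq :: "('o, 'm) cat_data \<Rightarrow> 'o \<Rightarrow> 'o \<Rightarrow> (nat \<Rightarrow> 'm) \<Rightarrow> bool" where
  "is_pre_Dseq X A B f \<longleftrightarrow> A \<in> c_obj X \<and> B \<in> c_obj X \<and> (\<forall>n. f n \<in> hom X (Pn X n A) B)"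

definition is_Dseq :: "('o, 'm) cat_data \<Rightarrow> 'o \<Rightarrow> 'o \<Rightarrow> (nat \<Rightarrow> 'm) \<Rightarrow> bool" where
  "is_Dseq X A B f \<longleftrightarrow> is_pre_Dseq X A B f \<and>
     (\<forall>n. let C = Pn X n A; g1 = (Dop ^^ Suc n) f; g2 = (Dop ^^ Suc (Suc n)) f in
        seq_pre X (c_pair X (c_id X C) (c_zero X C C)) g1 = seq_zero X C B \<and>
        seq_pre X (cross X (c_id X C) (c_plus X (c_p0 X C C) (c_p1 X C C))) g1 =
          seq_plus X (seq_pre X (cross X (c_id X C) (c_p0 X C C)) g1)
                     (seq_pre X (cross X (c_id X C) (c_p1 X C C)) g1) \<and>
        seq_pre X (ell X C) g2 = g1 \<and>
        seq_pre X (cmid X C) g2 = g2)"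

definition Dseq_cat :: "('o, 'm) cat_data \<Rightarrow> ('o, nat \<Rightarrow> 'm) cat_data" where
  "Dseq_cat X = \<lparr>
     c_obj = c_obj X,
     c_arr = {f. \<exists>A B. is_Dseq X A B f},
     c_dom = (\<lambda>f. c_dom X (f 0)),
     c_cod = (\<lambda>f. c_cod X (f 0)),
     c_id = idseq X,
     c_comp = seq_comp X,
     c_plus = seq_plus X,
     c_zero = seq_zero X,
     c_prod = c_prod X,
     c_p0 = (\<lambda>A B. seq_post X (idseq X (c_prod X A B)) (c_p0 X A B)),
     c_p1 = (\<lambda>A B. seq_post X (idseq X (c_prod X A B)) (c_p1 X A B)),
     c_pair = (\<lambda>f g n. c_pair X (f n) (g n)),
     c_term = c_term X,
     c_bang = (\<lambda>A n. c_bang X (Pn X n A)) \<rparr>"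

definition delta :: "(nat \<Rightarrow> 'm) \<Rightarrow> nat \<Rightarrow> nat \<Rightarrow> 'm" where
  "delta f = (\<lambda>n. (Dop ^^ n) f)"

end

theory Submission
  imports Defs
begin

locale cla =
  fixes X :: "('o,'m) cat_data"
  assumes CLA: "is_cartesian_left_additive X"
begin

abbreviation Ob where "Ob \<equiv> c_obj X"
abbreviation H where "H \<equiv> hom X"
abbreviation cp (infixl "\<bullet>" 70) where "f \<bullet> g \<equiv> c_comp X f g"
abbreviation pl (infixl "\<oplus>" 65) where "f \<oplus> g \<equiv> c_plus X f g"
abbreviation Z where "Z \<equiv> c_zero X"
abbreviation ii where "ii \<equiv> c_id X"
abbreviation pr where "pr \<equiv> c_prod X"
abbreviation q0 where "q0 \<equiv> c_p0 X"
abbreviation q1 where "q1 \<equiv> c_p1 X"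
abbreviation pa where "pa \<equiv> c_pair X"

lemma LA: "is_left_additive X" using CLA unfolding is_cartesian_left_additive_def by blast
lemma CAT: "is_category X" using LA unfolding is_left_additive_def by blast

lemmas CATc = CAT[unfolded is_category_def]
lemmas LAc = LA[unfolded is_left_additive_def]
lemmas CLAc = CLA[unfolded is_cartesian_left_additive_def]

lemma homI: "f \<in> c_arr X \<Longrightarrow> c_dom X f = A \<Longrightarrow> c_cod X f = B \<Longrightarrow> f \<in> H A B"
  by (simp add: hom_def)
lemma dom_hom: "f \<in> H A B \<Longrightarrow> c_dom X f = A" by (simp add: hom_def)
lemma cod_hom: "f \<in> H A B \<Longrightarrow> c_cod X f = B" by (simp add: hom_def)
lemma hom_obj1: "f \<in> H A B \<Longrightarrow> A \<in> Ob"
  using CATc[THEN conjunct1] unfolding hom_def by blast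
lemma hom_obj2: "f \<in> H A B \<Longrightarrow> B \<in> Ob"
  using CATc[THEN conjunct1] unfolding hom_def by blast

lemma id_hom[intro]: "A \<in> Ob \<Longrightarrow> ii A \<in> H A A"
  using CATc[THEN conjunct2, THEN conjunct1] by blast
lemma comp_hom[intro]: "f \<in> H A B \<Longrightarrow> g \<in> H B C \<Longrightarrow> f \<bullet> g \<in> H A C"
  using CATc[THEN conjunct2, THEN conjunct2, THEN conjunct1] by blast
lemma id_l[simp]: "f \<in> H A B \<Longrightarrow> ii A \<bullet> f = f"
  using CATc[THEN conjunct2, THEN conjunct2, THEN conjunct2, THEN conjunct1] by blast
lemma id_r[simp]: "f \<in> H A B \<Longrightarrow> f \<bullet> ii B = f"
  using CATc[THEN conjunct2, THEN conjunct2, THEN conjunct2, THEN conjunct1] by blast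
lemma assoc: "f \<in> H A B \<Longrightarrow> g \<in> H B C \<Longrightarrow> h \<in> H C D \<Longrightarrow> (f \<bullet> g) \<bullet> h = f \<bullet> (g \<bullet> h)"
  using CATc[THEN conjunct2, THEN conjunct2, THEN conjunct2, THEN conjunct2] by blast

lemma zero_hom[intro]: "A \<in> Ob \<Longrightarrow> B \<in> Ob \<Longrightarrow> Z A B \<in> H A B"
  using LAc[THEN conjunct2, THEN conjunct1] by blast
lemma plus_hom[intro]: "f \<in> H A B \<Longrightarrow> g \<in> H A B \<Longrightarrow> f \<oplus> g \<in> H A B"
  using LAc[THEN conjunct2, THEN conjunct2, THEN conjunct1] by blast
lemma plus_assoc: "f \<in> H A B \<Longrightarrow> g \<in> H A B \<Longrightarrow> h \<in> H A B \<Longrightarrow> (f \<oplus> g) \<oplus> h = f \<oplus> (g \<oplus> h)"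
  using LAc[THEN conjunct2, THEN conjunct2, THEN conjunct2, THEN conjunct1] by blast
lemma plus_comm: "f \<in> H A B \<Longrightarrow> g \<in> H A B \<Longrightarrow> f \<oplus> g = g \<oplus> f"
  using LAc[THEN conjunct2, THEN conjunct2, THEN conjunct2, THEN conjunct2, THEN conjunct1] by blast
lemma plus_zero[simp]: "f \<in> H A B \<Longrightarrow> f \<oplus> Z A B = f"
  using LAc[THEN conjunct2, THEN conjunct2, THEN conjunct2, THEN conjunct2, THEN conjunct2, THEN conjunct1] by blast
lemma zero_plus[simp]: "f \<in> H A B \<Longrightarrow> Z A B \<oplus> f = f"
proof -
  assume h: "f \<in> H A B"
  have z: "Z A B \<in> H A B" using zero_hom hom_obj1[OF h] hom_obj2[OF h] by blast
  show ?thesis using plus_comm[OF z h] plus_zero[OF h] by simp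
qed
lemma comp_plus: "f \<in> H A B \<Longrightarrow> g \<in> H B C \<Longrightarrow> h \<in> H B C \<Longrightarrow> f \<bullet> (g \<oplus> h) = f \<bullet> g \<oplus> f \<bullet> h"
  using LAc[THEN conjunct2, THEN conjunct2, THEN conjunct2, THEN conjunct2, THEN conjunct2, THEN conjunct2, THEN conjunct1] by blast
lemma comp_zero[simp]: "f \<in> H A B \<Longrightarrow> C \<in> Ob \<Longrightarrow> f \<bullet> Z B C = Z A C"
  using LAc[THEN conjunct2, THEN conjunct2, THEN conjunct2, THEN conjunct2, THEN conjunct2, THEN conjunct2, THEN conjunct2] by blast
lemma plus_swap: "a \<in> H A B \<Longrightarrow> b \<in> H A B \<Longrightarrow> c \<in> H A B \<Longrightarrow> d \<in> H A B \<Longrightarrow>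
   (a \<oplus> b) \<oplus> (c \<oplus> d) = (a \<oplus> c) \<oplus> (b \<oplus> d)"
proof -
  assume h: "a \<in> H A B" "b \<in> H A B" "c \<in> H A B" "d \<in> H A B"
  have "(a \<oplus> b) \<oplus> (c \<oplus> d) = a \<oplus> (b \<oplus> (c \<oplus> d))" using h by (simp add: plus_assoc plus_hom)
  also have "b \<oplus> (c \<oplus> d) = (b \<oplus> c) \<oplus> d" using h by (simp add: plus_assoc plus_hom)
  also have "b \<oplus> c = c \<oplus> b" by (rule plus_comm[OF h(2,3)])
  also have "(c \<oplus> b) \<oplus> d = c \<oplus> (b \<oplus> d)" using h by (simp add: plus_assoc plus_hom)
  also have "a \<oplus> (c \<oplus> (b \<oplus> d)) = (a \<oplus> c) \<oplus> (b \<oplus> d)" using h by (simp add: plus_assoc plus_hom)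
  finally show ?thesis .
qed
lemma zero_zero[simp]: "A \<in> Ob \<Longrightarrow> B \<in> Ob \<Longrightarrow> Z A B \<oplus> Z A B = Z A B"
  by (rule plus_zero[OF zero_hom])

lemma term_obj[intro]: "c_term X \<in> Ob"
  using CLAc[THEN conjunct2, THEN conjunct1] by blast
lemma bang_hom[intro]: "A \<in> Ob \<Longrightarrow> c_bang X A \<in> H A (c_term X)"
  using CLAc[THEN conjunct2, THEN conjunct2, THEN conjunct1] by blast
lemma bang_uniq: "h \<in> H A (c_term X) \<Longrightarrow> h = c_bang X A"
proof -
  assume a: "h \<in> H A (c_term X)"
  have c: "\<forall>A\<in>Ob. c_bang X A \<in> H A (c_term X) \<and> (\<forall>h\<in>H A (c_term X). h = c_bang X A)"
    by (rule CLAc[THEN conjunct2, THEN conjunct2, THEN conjunct1])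
  show ?thesis using c hom_obj1[OF a] a by auto
qed

lemma prod_obj[intro]: "A \<in> Ob \<Longrightarrow> B \<in> Ob \<Longrightarrow> pr A B \<in> Ob"
  using CLAc[THEN conjunct2, THEN conjunct2, THEN conjunct2, THEN conjunct1] by blast
lemma p0_hom[intro]: "A \<in> Ob \<Longrightarrow> B \<in> Ob \<Longrightarrow> q0 A B \<in> H (pr A B) A"
  using CLAc[THEN conjunct2, THEN conjunct2, THEN conjunct2, THEN conjunct1] by blast
lemma p1_hom[intro]: "A \<in> Ob \<Longrightarrow> B \<in> Ob \<Longrightarrow> q1 A B \<in> H (pr A B) B"
  using CLAc[THEN conjunct2, THEN conjunct2, THEN conjunct2, THEN conjunct1] by blast
lemma p0_additive: "A \<in> Ob \<Longrightarrow> B \<in> Ob \<Longrightarrow> is_additive X (q0 A B)"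
  using CLAc[THEN conjunct2, THEN conjunct2, THEN conjunct2, THEN conjunct1] by blast
lemma p1_additive: "A \<in> Ob \<Longrightarrow> B \<in> Ob \<Longrightarrow> is_additive X (q1 A B)"
  using CLAc[THEN conjunct2, THEN conjunct2, THEN conjunct2, THEN conjunct1] by blast
lemma pair_hom[intro]: "f \<in> H D A \<Longrightarrow> g \<in> H D B \<Longrightarrow> pa f g \<in> H D (pr A B)"
  using CLAc[THEN conjunct2, THEN conjunct2, THEN conjunct2, THEN conjunct2, THEN conjunct1] hom_obj2[of f D A] hom_obj2[of g D B] by blast
lemma pair_p0[simp]: "f \<in> H D A \<Longrightarrow> g \<in> H D B \<Longrightarrow> pa f g \<bullet> q0 A B = f"
  using CLAc[THEN conjunct2, THEN conjunct2, THEN conjunct2, THEN conjunct2, THEN conjunct1] hom_obj2[of f D A] hom_obj2[of g D B] by blast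
lemma pair_p1[simp]: "f \<in> H D A \<Longrightarrow> g \<in> H D B \<Longrightarrow> pa f g \<bullet> q1 A B = g"
  using CLAc[THEN conjunct2, THEN conjunct2, THEN conjunct2, THEN conjunct2, THEN conjunct1] hom_obj2[of f D A] hom_obj2[of g D B] by blast
lemma pair_eta: "A \<in> Ob \<Longrightarrow> B \<in> Ob \<Longrightarrow> h \<in> H D (pr A B) \<Longrightarrow> pa (h \<bullet> q0 A B) (h \<bullet> q1 A B) = h"
  using CLAc[THEN conjunct2, THEN conjunct2, THEN conjunct2, THEN conjunct2, THEN conjunct2] by blast

lemma p0_plus: "A \<in> Ob \<Longrightarrow> B \<in> Ob \<Longrightarrow> f \<in> H D (pr A B) \<Longrightarrow> g \<in> H D (pr A B) \<Longrightarrow>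
   (f \<oplus> g) \<bullet> q0 A B = f \<bullet> q0 A B \<oplus> g \<bullet> q0 A B"
  using p0_additive[of A B] dom_hom[OF p0_hom[of A B]] unfolding is_additive_def by auto
lemma p1_plus: "A \<in> Ob \<Longrightarrow> B \<in> Ob \<Longrightarrow> f \<in> H D (pr A B) \<Longrightarrow> g \<in> H D (pr A B) \<Longrightarrow>
   (f \<oplus> g) \<bullet> q1 A B = f \<bullet> q1 A B \<oplus> g \<bullet> q1 A B"
  using p1_additive[of A B] dom_hom[OF p1_hom[of A B]] unfolding is_additive_def by auto
lemma zero_p0[simp]: "A \<in> Ob \<Longrightarrow> B \<in> Ob \<Longrightarrow> D \<in> Ob \<Longrightarrow> Z D (pr A B) \<bullet> q0 A B = Z D A"
  using p0_additive[of A B] dom_hom[OF p0_hom[of A B]] cod_hom[OF p0_hom[of A B]]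
  unfolding is_additive_def by auto
lemma zero_p1[simp]: "A \<in> Ob \<Longrightarrow> B \<in> Ob \<Longrightarrow> D \<in> Ob \<Longrightarrow> Z D (pr A B) \<bullet> q1 A B = Z D B"
  using p1_additive[of A B] dom_hom[OF p1_hom[of A B]] cod_hom[OF p1_hom[of A B]]
  unfolding is_additive_def by auto


abbreviation ar where "ar f \<equiv> f \<in> c_arr X"
abbreviation dm where "dm \<equiv> c_dom X"
abbreviation cd where "cd \<equiv> c_cod X"

lemma H_iff: "f \<in> H A B \<longleftrightarrow> ar f \<and> dm f = A \<and> cd f = B" by (simp add: hom_def)
lemma Hs: "ar f \<Longrightarrow> f \<in> H (dm f) (cd f)" by (simp add: hom_def)

lemma ar_dm[simp]: "ar f \<Longrightarrow> dm f \<in> Ob" using hom_obj1[OF Hs] .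
lemma ar_cd[simp]: "ar f \<Longrightarrow> cd f \<in> Ob" using hom_obj2[OF Hs] .

lemma id_ar[simp]: "A \<in> Ob \<Longrightarrow> ar (ii A)" "A \<in> Ob \<Longrightarrow> dm (ii A) = A" "A \<in> Ob \<Longrightarrow> cd (ii A) = A"
  using id_hom[of A] by (auto simp: H_iff)
lemma comp_ar[simp]:
  "ar f \<Longrightarrow> ar g \<Longrightarrow> cd f = dm g \<Longrightarrow> ar (f \<bullet> g)"
  "ar f \<Longrightarrow> ar g \<Longrightarrow> cd f = dm g \<Longrightarrow> dm (f \<bullet> g) = dm f"
  "ar f \<Longrightarrow> ar g \<Longrightarrow> cd f = dm g \<Longrightarrow> cd (f \<bullet> g) = cd g"
  using comp_hom[OF Hs[of f], of g "cd g"] Hs[of g] by (auto simp: H_iff)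
lemma idl[simp]: "ar f \<Longrightarrow> A = dm f \<Longrightarrow> ii A \<bullet> f = f" using id_l[OF Hs] by simp
lemma idr[simp]: "ar f \<Longrightarrow> B = cd f \<Longrightarrow> f \<bullet> ii B = f" using id_r[OF Hs] by simp
lemma asc[simp]: "ar f \<Longrightarrow> ar g \<Longrightarrow> ar h \<Longrightarrow> cd f = dm g \<Longrightarrow> cd g = dm h \<Longrightarrow> (f \<bullet> g) \<bullet> h = f \<bullet> (g \<bullet> h)"
  using assoc[OF Hs[of f], of g "cd g" h "cd h"] Hs[of g] Hs[of h] by simp

lemma zero_ar[simp]: "A \<in> Ob \<Longrightarrow> B \<in> Ob \<Longrightarrow> ar (Z A B)"
  "A \<in> Ob \<Longrightarrow> B \<in> Ob \<Longrightarrow> dm (Z A B) = A" "A \<in> Ob \<Longrightarrow> B \<in> Ob \<Longrightarrow> cd (Z A B) = B"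
  using zero_hom[of A B] by (auto simp: H_iff)
lemma plus_ar[simp]:
  "ar f \<Longrightarrow> ar g \<Longrightarrow> dm f = dm g \<Longrightarrow> cd f = cd g \<Longrightarrow> ar (f \<oplus> g)"
  "ar f \<Longrightarrow> ar g \<Longrightarrow> dm f = dm g \<Longrightarrow> cd f = cd g \<Longrightarrow> dm (f \<oplus> g) = dm f"
  "ar f \<Longrightarrow> ar g \<Longrightarrow> dm f = dm g \<Longrightarrow> cd f = cd g \<Longrightarrow> cd (f \<oplus> g) = cd f"
  using plus_hom[OF Hs[of f], of g] Hs[of g] by (auto simp: H_iff)
lemma cplus[simp]: "ar f \<Longrightarrow> ar g \<Longrightarrow> ar h \<Longrightarrow> cd f = dm g \<Longrightarrow> dm g = dm h \<Longrightarrow> cd g = cd h \<Longrightarrow>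
   f \<bullet> (g \<oplus> h) = f \<bullet> g \<oplus> f \<bullet> h"
  using comp_plus[OF Hs[of f], of g "cd g" h] Hs[of g] Hs[of h] by simp
lemma czero[simp]: "ar f \<Longrightarrow> B = cd f \<Longrightarrow> C \<in> Ob \<Longrightarrow> f \<bullet> Z B C = Z (dm f) C"
  using comp_zero[OF Hs[of f]] by simp
lemma pzero[simp]: "ar f \<Longrightarrow> A = dm f \<Longrightarrow> B = cd f \<Longrightarrow> f \<oplus> Z A B = f"
  using plus_zero[OF Hs[of f]] by simp
lemma zerop[simp]: "ar f \<Longrightarrow> A = dm f \<Longrightarrow> B = cd f \<Longrightarrow> Z A B \<oplus> f = f"
  using zero_plus[OF Hs[of f]] by simp

lemma prod_ob[simp]: "A \<in> Ob \<Longrightarrow> B \<in> Ob \<Longrightarrow> pr A B \<in> Ob" by (rule prod_obj)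
lemma p0_ar[simp]: "A \<in> Ob \<Longrightarrow> B \<in> Ob \<Longrightarrow> ar (q0 A B)"
  "A \<in> Ob \<Longrightarrow> B \<in> Ob \<Longrightarrow> dm (q0 A B) = pr A B" "A \<in> Ob \<Longrightarrow> B \<in> Ob \<Longrightarrow> cd (q0 A B) = A"
  using p0_hom[of A B] by (auto simp: H_iff)
lemma p1_ar[simp]: "A \<in> Ob \<Longrightarrow> B \<in> Ob \<Longrightarrow> ar (q1 A B)"
  "A \<in> Ob \<Longrightarrow> B \<in> Ob \<Longrightarrow> dm (q1 A B) = pr A B" "A \<in> Ob \<Longrightarrow> B \<in> Ob \<Longrightarrow> cd (q1 A B) = B"
  using p1_hom[of A B] by (auto simp: H_iff)
lemma pair_ar[simp]:
  "ar f \<Longrightarrow> ar g \<Longrightarrow> dm f = dm g \<Longrightarrow> ar (pa f g)"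
  "ar f \<Longrightarrow> ar g \<Longrightarrow> dm f = dm g \<Longrightarrow> dm (pa f g) = dm f"
  "ar f \<Longrightarrow> ar g \<Longrightarrow> dm f = dm g \<Longrightarrow> cd (pa f g) = pr (cd f) (cd g)"
  using pair_hom[OF Hs[of f], of g "cd g"] Hs[of g] by (auto simp: H_iff)
lemma pp0[simp]: "ar f \<Longrightarrow> ar g \<Longrightarrow> dm f = dm g \<Longrightarrow> A = cd f \<Longrightarrow> B = cd g \<Longrightarrow> pa f g \<bullet> q0 A B = f"
  using pair_p0[OF Hs[of f], of g] Hs[of g] by simp
lemma pp1[simp]: "ar f \<Longrightarrow> ar g \<Longrightarrow> dm f = dm g \<Longrightarrow> A = cd f \<Longrightarrow> B = cd g \<Longrightarrow> pa f g \<bullet> q1 A B = g"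
  using pair_p1[OF Hs[of f], of g] Hs[of g] by simp
lemma pp0'[simp]: "ar f \<Longrightarrow> ar g \<Longrightarrow> dm f = dm g \<Longrightarrow> A = cd f \<Longrightarrow> B = cd g \<Longrightarrow> ar h \<Longrightarrow> dm h = A \<Longrightarrow>
   pa f g \<bullet> (q0 A B \<bullet> h) = f \<bullet> h"
  by (subst asc[symmetric]) auto
lemma pp1'[simp]: "ar f \<Longrightarrow> ar g \<Longrightarrow> dm f = dm g \<Longrightarrow> A = cd f \<Longrightarrow> B = cd g \<Longrightarrow> ar h \<Longrightarrow> dm h = B \<Longrightarrow>
   pa f g \<bullet> (q1 A B \<bullet> h) = g \<bullet> h"
  by (subst asc[symmetric]) auto
lemma idl'[simp]: "ar f \<Longrightarrow> A = dm f \<Longrightarrow> ar g \<Longrightarrow> cd f = dm g \<Longrightarrow> ii A \<bullet> (f \<bullet> g) = f \<bullet> g"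
  by simp

lemma peta: "A \<in> Ob \<Longrightarrow> B \<in> Ob \<Longrightarrow> ar h \<Longrightarrow> cd h = pr A B \<Longrightarrow> pa (h \<bullet> q0 A B) (h \<bullet> q1 A B) = h"
  using pair_eta[of A B h "dm h"] Hs[of h] by simp

lemma pext: "A \<in> Ob \<Longrightarrow> B \<in> Ob \<Longrightarrow> ar h \<Longrightarrow> ar k \<Longrightarrow> cd h = pr A B \<Longrightarrow> cd k = pr A B \<Longrightarrow>
   h \<bullet> q0 A B = k \<bullet> q0 A B \<Longrightarrow> h \<bullet> q1 A B = k \<bullet> q1 A B \<Longrightarrow> h = k"
  by (metis peta)

lemma p0plus[simp]: "A \<in> Ob \<Longrightarrow> B \<in> Ob \<Longrightarrow> ar f \<Longrightarrow> ar g \<Longrightarrow> dm f = dm g \<Longrightarrow> cd f = pr A B \<Longrightarrow> cd g = pr A B \<Longrightarrow>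
   (f \<oplus> g) \<bullet> q0 A B = f \<bullet> q0 A B \<oplus> g \<bullet> q0 A B"
  using p0_plus[of A B f "dm f" g] Hs[of f] Hs[of g] by simp
lemma p1plus[simp]: "A \<in> Ob \<Longrightarrow> B \<in> Ob \<Longrightarrow> ar f \<Longrightarrow> ar g \<Longrightarrow> dm f = dm g \<Longrightarrow> cd f = pr A B \<Longrightarrow> cd g = pr A B \<Longrightarrow>
   (f \<oplus> g) \<bullet> q1 A B = f \<bullet> q1 A B \<oplus> g \<bullet> q1 A B"
  using p1_plus[of A B f "dm f" g] Hs[of f] Hs[of g] by simp
lemma zp0[simp]: "A \<in> Ob \<Longrightarrow> B \<in> Ob \<Longrightarrow> D \<in> Ob \<Longrightarrow> Z D (pr A B) \<bullet> q0 A B = Z D A" by (rule zero_p0)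
lemma zp1[simp]: "A \<in> Ob \<Longrightarrow> B \<in> Ob \<Longrightarrow> D \<in> Ob \<Longrightarrow> Z D (pr A B) \<bullet> q1 A B = Z D B" by (rule zero_p1)

lemma cpair[simp]: "ar h \<Longrightarrow> ar f \<Longrightarrow> ar g \<Longrightarrow> dm f = dm g \<Longrightarrow> cd h = dm f \<Longrightarrow> h \<bullet> pa f g = pa (h \<bullet> f) (h \<bullet> g)"
  by (rule pext[of "cd f" "cd g"]) auto

lemma pplus: "ar a \<Longrightarrow> ar b \<Longrightarrow> ar c \<Longrightarrow> ar d \<Longrightarrow> dm a = dm b \<Longrightarrow> dm c = dm a \<Longrightarrow> dm d = dm a \<Longrightarrow>
   cd c = cd a \<Longrightarrow> cd d = cd b \<Longrightarrow> pa a b \<oplus> pa c d = pa (a \<oplus> c) (b \<oplus> d)"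
  by (rule pext[of "cd a" "cd b"]) auto

lemma pzero2: "D \<in> Ob \<Longrightarrow> A \<in> Ob \<Longrightarrow> B \<in> Ob \<Longrightarrow> pa (Z D A) (Z D B) = Z D (pr A B)"
  by (rule pext[of A B]) auto

end
context cla begin

definition addv where
  "addv h \<longleftrightarrow> ar h \<and> (\<forall>f g. ar f \<longrightarrow> ar g \<longrightarrow> dm f = dm g \<longrightarrow> cd f = dm h \<longrightarrow> cd g = dm h \<longrightarrow>
      (f \<oplus> g) \<bullet> h = f \<bullet> h \<oplus> g \<bullet> h) \<and> (\<forall>D\<in>Ob. Z D (dm h) \<bullet> h = Z D (cd h))"

lemma addv_ar[simp]: "addv h \<Longrightarrow> ar h" unfolding addv_def by blast
lemma addv_plus[simp]: "addv h \<Longrightarrow> ar f \<Longrightarrow> ar g \<Longrightarrow> dm f = dm g \<Longrightarrow> cd f = dm h \<Longrightarrow> cd g = dm h \<Longrightarrow>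
      (f \<oplus> g) \<bullet> h = f \<bullet> h \<oplus> g \<bullet> h" unfolding addv_def by blast
lemma addv_zero[simp]: "addv h \<Longrightarrow> D \<in> Ob \<Longrightarrow> A = dm h \<Longrightarrow> Z D A \<bullet> h = Z D (cd h)" unfolding addv_def by blast

lemma addv_q0[simp]: "A \<in> Ob \<Longrightarrow> B \<in> Ob \<Longrightarrow> addv (q0 A B)" unfolding addv_def by simp
lemma addv_q1[simp]: "A \<in> Ob \<Longrightarrow> B \<in> Ob \<Longrightarrow> addv (q1 A B)" unfolding addv_def by simp
lemma addv_id[simp]: "A \<in> Ob \<Longrightarrow> addv (ii A)" unfolding addv_def by simp
lemma addv_Z[simp]: "A \<in> Ob \<Longrightarrow> B \<in> Ob \<Longrightarrow> addv (Z A B)" unfolding addv_def by simp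
lemma addv_pa[simp]: assumes f: "addv f" and g: "addv g" and e: "dm f = dm g" shows "addv (pa f g)"
proof -
  have af: "ar f" "ar g" using f g by auto
  have 1: "(a \<oplus> b) \<bullet> pa f g = a \<bullet> pa f g \<oplus> b \<bullet> pa f g"
    if "ar a" "ar b" "dm a = dm b" "cd a = dm f" "cd b = dm f" for a b
  proof -
    have "(a \<oplus> b) \<bullet> pa f g = pa ((a \<oplus> b) \<bullet> f) ((a \<oplus> b) \<bullet> g)"
      using that af e by (intro cpair) auto
    also have "\<dots> = pa (a \<bullet> f \<oplus> b \<bullet> f) (a \<bullet> g \<oplus> b \<bullet> g)"
      using that af e f g by (simp only: addv_plus)
    also have "\<dots> = pa (a \<bullet> f) (a \<bullet> g) \<oplus> pa (b \<bullet> f) (b \<bullet> g)"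
      using that af e by (intro pplus[symmetric]) auto
    also have "\<dots> = a \<bullet> pa f g \<oplus> b \<bullet> pa f g"
      using that af e by (simp only: cpair)
    finally show ?thesis .
  qed
  have 2: "Z D (dm f) \<bullet> pa f g = Z D (pr (cd f) (cd g))" if "D \<in> Ob" for D
  proof -
    have "Z D (dm f) \<bullet> pa f g = pa (Z D (dm f) \<bullet> f) (Z D (dm f) \<bullet> g)"
      using that af e by (intro cpair) auto
    also have "\<dots> = pa (Z D (cd f)) (Z D (cd g))" using that f g e by simp
    also have "\<dots> = Z D (pr (cd f) (cd g))" using that af by (intro pzero2) auto
    finally show ?thesis .
  qed
  show ?thesis unfolding addv_def using 1 2 af e by auto
qed

lemma addv_comp[simp]: assumes h: "addv h" and k: "addv k" and e: "cd h = dm k" shows "addv (h \<bullet> k)"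
proof -
  have a: "ar h" "ar k" using h k by auto
  have 1: "(a \<oplus> b) \<bullet> (h \<bullet> k) = a \<bullet> (h \<bullet> k) \<oplus> b \<bullet> (h \<bullet> k)"
    if "ar a" "ar b" "dm a = dm b" "cd a = dm h" "cd b = dm h" for a b
  proof -
    have "(a \<oplus> b) \<bullet> (h \<bullet> k) = ((a \<oplus> b) \<bullet> h) \<bullet> k" using that a e by simp
    also have "\<dots> = (a \<bullet> h \<oplus> b \<bullet> h) \<bullet> k" using that h by simp
    also have "\<dots> = (a \<bullet> h) \<bullet> k \<oplus> (b \<bullet> h) \<bullet> k" using that a e k by (intro addv_plus) auto
    also have "\<dots> = a \<bullet> (h \<bullet> k) \<oplus> b \<bullet> (h \<bullet> k)" using that a e by simp
    finally show ?thesis .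
  qed
  have 2: "Z D (dm h) \<bullet> (h \<bullet> k) = Z D (cd k)" if "D \<in> Ob" for D
  proof -
    have "Z D (dm h) \<bullet> (h \<bullet> k) = (Z D (dm h) \<bullet> h) \<bullet> k" using that a e by simp
    also have "\<dots> = Z D (cd k)" using that h k e by simp
    finally show ?thesis .
  qed
  show ?thesis unfolding addv_def using 1 2 a e by auto
qed

abbreviation cr where "cr \<equiv> cross X"

lemma cr_ar[simp]:
  "ar f \<Longrightarrow> ar g \<Longrightarrow> ar (cr f g)"
  "ar f \<Longrightarrow> ar g \<Longrightarrow> dm (cr f g) = pr (dm f) (dm g)"
  "ar f \<Longrightarrow> ar g \<Longrightarrow> cd (cr f g) = pr (cd f) (cd g)"
  unfolding cross_def by simp_all

lemma cr_p0[simp]: "ar f \<Longrightarrow> ar g \<Longrightarrow> A = cd f \<Longrightarrow> B = cd g \<Longrightarrow> cr f g \<bullet> q0 A B = q0 (dm f) (dm g) \<bullet> f"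
  unfolding cross_def by simp
lemma cr_p1[simp]: "ar f \<Longrightarrow> ar g \<Longrightarrow> A = cd f \<Longrightarrow> B = cd g \<Longrightarrow> cr f g \<bullet> q1 A B = q1 (dm f) (dm g) \<bullet> g"
  unfolding cross_def by simp
lemma cr_p0'[simp]: "ar f \<Longrightarrow> ar g \<Longrightarrow> A = cd f \<Longrightarrow> B = cd g \<Longrightarrow> ar h \<Longrightarrow> dm h = A \<Longrightarrow>
   cr f g \<bullet> (q0 A B \<bullet> h) = q0 (dm f) (dm g) \<bullet> (f \<bullet> h)"
  by (subst asc[symmetric]) simp_all
lemma cr_p1'[simp]: "ar f \<Longrightarrow> ar g \<Longrightarrow> A = cd f \<Longrightarrow> B = cd g \<Longrightarrow> ar h \<Longrightarrow> dm h = B \<Longrightarrow>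
   cr f g \<bullet> (q1 A B \<bullet> h) = q1 (dm f) (dm g) \<bullet> (g \<bullet> h)"
  by (subst asc[symmetric]) simp_all

lemma pa_cr[simp]: "ar a \<Longrightarrow> ar b \<Longrightarrow> dm a = dm b \<Longrightarrow> ar f \<Longrightarrow> ar g \<Longrightarrow> cd a = dm f \<Longrightarrow> cd b = dm g \<Longrightarrow>
   pa a b \<bullet> cr f g = pa (a \<bullet> f) (b \<bullet> g)"
  unfolding cross_def by simp
lemma pa_cr'[simp]: "ar a \<Longrightarrow> ar b \<Longrightarrow> dm a = dm b \<Longrightarrow> ar f \<Longrightarrow> ar g \<Longrightarrow> cd a = dm f \<Longrightarrow> cd b = dm g \<Longrightarrow>
   ar h \<Longrightarrow> dm h = pr (cd f) (cd g) \<Longrightarrow> pa a b \<bullet> (cr f g \<bullet> h) = pa (a \<bullet> f) (b \<bullet> g) \<bullet> h"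
  by (subst asc[symmetric]) simp_all

lemma cr_cr[simp]: "ar f \<Longrightarrow> ar g \<Longrightarrow> ar f' \<Longrightarrow> ar g' \<Longrightarrow> cd f = dm f' \<Longrightarrow> cd g = dm g' \<Longrightarrow>
   cr f g \<bullet> cr f' g' = cr (f \<bullet> f') (g \<bullet> g')"
  unfolding cross_def by simp
lemma cr_cr'[simp]: "ar f \<Longrightarrow> ar g \<Longrightarrow> ar f' \<Longrightarrow> ar g' \<Longrightarrow> cd f = dm f' \<Longrightarrow> cd g = dm g' \<Longrightarrow>
   ar h \<Longrightarrow> dm h = pr (cd f') (cd g') \<Longrightarrow> cr f g \<bullet> (cr f' g' \<bullet> h) = cr (f \<bullet> f') (g \<bullet> g') \<bullet> h"
  by (subst asc[symmetric]) simp_all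

lemma cr_id[simp]: "A \<in> Ob \<Longrightarrow> B \<in> Ob \<Longrightarrow> cr (ii A) (ii B) = ii (pr A B)"
  unfolding cross_def by (rule pext[of A B]) simp_all

lemma addv_cr[simp]: "addv f \<Longrightarrow> addv g \<Longrightarrow> addv (cr f g)"
  unfolding cross_def by simp

lemma Pn_0[simp]: "Pn X 0 A = A" by (simp add: Pn_def)
lemma Pn_Suc[simp]: "Pn X (Suc n) A = pr (Pn X n A) (Pn X n A)" by (simp add: Pn_def)
lemma Pn_ob[simp]: "A \<in> Ob \<Longrightarrow> Pn X n A \<in> Ob" by (induction n) auto
lemma Pn_pr[simp]: "Pn X n (pr A A) = pr (Pn X n A) (Pn X n A)"
  by (induction n) simp_all
lemma Pn_Pn[simp]: "Pn X k (Pn X n A) = Pn X (k + n) A"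
  by (simp add: Pn_def funpow_add)

lemma Pmap_0[simp]: "Pmap X 0 h = h" by (simp add: Pmap_def)
lemma Pmap_Suc: "Pmap X (Suc n) h = cr (Pmap X n h) (Pmap X n h)" by (simp add: Pmap_def)
lemma Pmap_Suc2: "Pmap X (Suc n) h = Pmap X n (cr h h)"
  by (induction n) (simp_all add: Pmap_Suc)
lemma Pmap_ar[simp]:
  "ar h \<Longrightarrow> ar (Pmap X n h)"
  "ar h \<Longrightarrow> dm (Pmap X n h) = Pn X n (dm h)"
  "ar h \<Longrightarrow> cd (Pmap X n h) = Pn X n (cd h)"
  by (induction n) (simp_all add: Pmap_Suc)
lemma Pmap_fuse[simp]: "ar f \<Longrightarrow> ar g \<Longrightarrow> cd f = dm g \<Longrightarrow> Pmap X n f \<bullet> Pmap X n g = Pmap X n (f \<bullet> g)"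
  by (induction n) (simp_all add: Pmap_Suc)
lemma Pmap_fuse'[simp]: "ar f \<Longrightarrow> ar g \<Longrightarrow> cd f = dm g \<Longrightarrow> ar h \<Longrightarrow> dm h = Pn X n (cd g) \<Longrightarrow>
   Pmap X n f \<bullet> (Pmap X n g \<bullet> h) = Pmap X n (f \<bullet> g) \<bullet> h"
  by (subst asc[symmetric]) simp_all
lemma Pmap_id[simp]: "A \<in> Ob \<Longrightarrow> Pmap X n (ii A) = ii (Pn X n A)"
  by (induction n) (simp_all add: Pmap_Suc)
lemma Pmap_Pmap[simp]: "Pmap X k (Pmap X n h) = Pmap X (k + n) h"
  by (simp add: Pmap_def funpow_add)
lemma addv_Pmap[simp]: "addv h \<Longrightarrow> addv (Pmap X n h)"
  by (induction n) (simp_all add: Pmap_Suc)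
lemma Pmap_Z[simp]: "A \<in> Ob \<Longrightarrow> B \<in> Ob \<Longrightarrow> Pmap X n (Z A B) = Z (Pn X n A) (Pn X n B)"
  by (induction n) (simp_all add: Pmap_Suc cross_def pzero2)

abbreviation iq where "iq \<equiv> idseq X"

lemma iq_ar[simp]:
  "A \<in> Ob \<Longrightarrow> ar (iq A n)" "A \<in> Ob \<Longrightarrow> dm (iq A n) = Pn X n A" "A \<in> Ob \<Longrightarrow> cd (iq A n) = A"
  by (induction n) simp_all

lemma addv_iq[simp]: "A \<in> Ob \<Longrightarrow> addv (iq A n)" by (induction n) simp_all

lemma iq_nat[simp]: "ar h \<Longrightarrow> A = dm h \<Longrightarrow> B = cd h \<Longrightarrow> Pmap X n h \<bullet> iq B n = iq A n \<bullet> h"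
proof (induction n)
  case 0 then show ?case by simp
next
  case (Suc n)
  have "Pmap X (Suc n) h \<bullet> iq B (Suc n) = (Pmap X (Suc n) h \<bullet> q1 (Pn X n B) (Pn X n B)) \<bullet> iq B n"
    using Suc.prems by (simp add: Pmap_Suc)
  also have "\<dots> = q1 (Pn X n A) (Pn X n A) \<bullet> (Pmap X n h \<bullet> iq B n)"
    using Suc.prems by (simp add: Pmap_Suc)
  also have "\<dots> = iq A (Suc n) \<bullet> h" using Suc by simp
  finally show ?case .
qed
lemma iq_nat'[simp]: "ar h \<Longrightarrow> A = dm h \<Longrightarrow> B = cd h \<Longrightarrow> ar k \<Longrightarrow> dm k = B \<Longrightarrow>
  Pmap X n h \<bullet> (iq B n \<bullet> k) = iq A n \<bullet> (h \<bullet> k)"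
  by (subst asc[symmetric]) simp_all

lemma iq_pr[simp]: "A \<in> Ob \<Longrightarrow> iq (pr A A) n \<bullet> q1 A A = q1 (Pn X n A) (Pn X n A) \<bullet> iq A n"
proof (induction n)
  case 0 then show ?case by simp
next
  case (Suc n)
  have "iq (pr A A) (Suc n) \<bullet> q1 A A = q1 (Pn X (Suc n) A) (Pn X (Suc n) A) \<bullet> (iq (pr A A) n \<bullet> q1 A A)"
    using Suc.prems by simp
  also have "\<dots> = q1 (Pn X (Suc n) A) (Pn X (Suc n) A) \<bullet> iq A (Suc n)" using Suc by simp
  finally show ?case by simp
qed
lemma iq_pr'[simp]: "A \<in> Ob \<Longrightarrow> ar k \<Longrightarrow> dm k = A \<Longrightarrow>
   iq (pr A A) n \<bullet> (q1 A A \<bullet> k) = q1 (Pn X n A) (Pn X n A) \<bullet> (iq A n \<bullet> k)"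
  by (subst asc[symmetric]) simp_all

lemma iq_add: "A \<in> Ob \<Longrightarrow> iq (Pn X m A) k \<bullet> iq A m = iq A (k + m)"
  by (induction k) simp_all

end
context cla begin

definition sq where
  "sq A B f \<longleftrightarrow> A \<in> Ob \<and> B \<in> Ob \<and> (\<forall>n. ar (f n) \<and> dm (f n) = Pn X n A \<and> cd (f n) = B)"

lemma sqs: assumes "sq A B f" shows "ar (f n)" "dm (f n) = Pn X n A" "cd (f n) = B" "A \<in> Ob" "B \<in> Ob"
  using assms unfolding sq_def by auto

lemma sqI: "A \<in> Ob \<Longrightarrow> B \<in> Ob \<Longrightarrow> (\<And>n. ar (f n)) \<Longrightarrow> (\<And>n. dm (f n) = Pn X n A) \<Longrightarrow> (\<And>n. cd (f n) = B) \<Longrightarrow> sq A B f"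
  unfolding sq_def by auto

abbreviation T where "T \<equiv> Tseq X"
abbreviation sc where "sc \<equiv> seq_comp X"
abbreviation lin where "lin A h \<equiv> seq_post X (iq A) h"

lemma T_eq: assumes "sq A B f" shows "T f n = pa (Pmap X n (q0 A A) \<bullet> f n) (f (Suc n))"
  using sqs[OF assms] by (simp add: Tseq_def)

lemma sq_T: assumes "sq A B f" shows "sq (pr A A) (pr B B) (T f)"
  by (rule sqI) (simp_all add: T_eq[OF assms] sqs[OF assms])

lemma Tn_Suc: "(T ^^ Suc n) f = (T ^^ n) (T f)"
  by (simp only: funpow_Suc_right comp_def)

declare funpow.simps(2)[simp del]
declare Tn_Suc[simp]

lemma sq_Tn: "sq A B f \<Longrightarrow> sq (Pn X n A) (Pn X n B) ((T ^^ n) f)"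
proof (induction n)
  case 0 then show ?case by simp
next
  case (Suc n) then show ?case using sq_T[OF Suc.IH[OF Suc.prems]] by (simp add: funpow.simps(2))
qed

lemma sc_eq: "sc f g n = (T ^^ n) f 0 \<bullet> g n" by (simp add: seq_comp_def)

lemma sq_sc: assumes f: "sq A B f" and g: "sq B C g" shows "sq A C (sc f g)"
  by (rule sqI) (simp_all add: sc_eq sqs[OF f] sqs[OF g] sqs[OF sq_Tn[OF f]])

lemma sq_lin: "ar h \<Longrightarrow> A = dm h \<Longrightarrow> sq A (cd h) (lin A h)"
  by (rule sqI) (simp_all add: seq_post_def)

lemma T_lin: assumes h: "ar h" "A = dm h" shows "T (lin A h) = lin (pr A A) (cr h h)"
proof
  fix n
  have A: "A \<in> Ob" using h by simp
  have e: "T (lin A h) n = pa (Pmap X n (q0 A A) \<bullet> (iq A n \<bullet> h)) (iq A (Suc n) \<bullet> h)"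
    using T_eq[OF sq_lin[OF h], of n] by (simp only: seq_post_def)
  show "T (lin A h) n = lin (pr A A) (cr h h) n"
    unfolding e unfolding seq_post_def
    by (rule pext[of "cd h" "cd h"]) (use h in simp_all)
qed

lemma Tn_lin: "ar h \<Longrightarrow> A = dm h \<Longrightarrow> (T ^^ n) (lin A h) = lin (Pn X n A) (Pmap X n h)"
proof (induction n arbitrary: A h)
  case 0 then show ?case by simp
next
  case (Suc n)
  have "(T ^^ Suc n) (lin A h) = (T ^^ n) (lin (pr A A) (cr h h))"
    by (simp only: Tn_Suc T_lin[OF Suc.prems])
  also have "\<dots> = lin (Pn X n (pr A A)) (Pmap X n (cr h h))"
    by (rule Suc.IH) (use Suc.prems in simp_all)
  finally show ?case by (simp add: Pmap_Suc2)
qed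

lemma Tn0_lin: "ar h \<Longrightarrow> A = dm h \<Longrightarrow> (T ^^ n) (lin A h) 0 = Pmap X n h"
  using Tn_lin[of h A n] by (simp add: seq_post_def)

lemma sc_lin_left: "ar h \<Longrightarrow> A = dm h \<Longrightarrow> sc (lin A h) f = seq_pre X h f"
  by (rule ext) (simp add: sc_eq Tn0_lin seq_pre_def del: idseq.simps)

lemma Tn_iq: "sq A B f \<Longrightarrow> (T ^^ n) f 0 \<bullet> iq B n = f n"
proof (induction n arbitrary: A B f)
  case 0 then show ?case using sqs[OF 0] by simp
next
  case (Suc n)
  note s = sqs[OF Suc.prems]
  have sT: "sq (pr A A) (pr B B) (T f)" by (rule sq_T[OF Suc.prems])
  note t = sqs[OF sq_Tn[OF sT, of n]]
  have "(T ^^ Suc n) f 0 \<bullet> iq B (Suc n) = (T ^^ n) (T f) 0 \<bullet> (iq (pr B B) n \<bullet> q1 B B)"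
    using s by (simp add: Tn_Suc)
  also have "\<dots> = ((T ^^ n) (T f) 0 \<bullet> iq (pr B B) n) \<bullet> q1 B B"
    using s t by simp
  also have "\<dots> = T f n \<bullet> q1 B B" using Suc.IH[OF sT] by simp
  also have "\<dots> = f (Suc n)" using s by (simp add: T_eq[OF Suc.prems])
  finally show ?case .
qed

lemma sc_lin_right: assumes f: "sq A B f" and k: "ar k" "dm k = B" shows "sc f (lin B k) = seq_post X f k"
proof
  fix n
  note s = sqs[OF f] and t = sqs[OF sq_Tn[OF f, of n]]
  have "sc f (lin B k) n = ((T ^^ n) f 0 \<bullet> iq B n) \<bullet> k"
    using s t k by (simp add: sc_eq seq_post_def)
  also have "\<dots> = f n \<bullet> k" using Tn_iq[OF f] by simp
  finally show "sc f (lin B k) n = seq_post X f k n" by (simp add: seq_post_def)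
qed

end
context cla begin

lemma KN:
  assumes "sq A B F" "sq A' B' G" "ar h" "dm h = A" "cd h = A'" "ar k" "dm k = B" "cd k = B'"
    "\<And>m. F m \<bullet> k = Pmap X m h \<bullet> G m"
  shows "(T ^^ n) F 0 \<bullet> Pmap X n k = Pmap X n h \<bullet> (T ^^ n) G 0"
  using assms
proof (induction n arbitrary: A B A' B' F G h k)
  case 0 then show ?case by simp
next
  case (Suc n)
  note F = sqs[OF Suc.prems(1)] and G = sqs[OF Suc.prems(2)]
  have e: "T F m \<bullet> cr k k = Pmap X m (cr h h) \<bullet> T G m" for m
  proof -
    have "T F m \<bullet> cr k k = pa (Pmap X m (q0 A A) \<bullet> F m) (F (Suc m)) \<bullet> cr k k"
      by (simp add: T_eq[OF Suc.prems(1)])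
    also have "\<dots> = pa (Pmap X m (q0 A A) \<bullet> (F m \<bullet> k)) (F (Suc m) \<bullet> k)"
      using F Suc.prems(3-8) by simp
    also have "\<dots> = pa (Pmap X m (q0 A A) \<bullet> (Pmap X m h \<bullet> G m)) (Pmap X (Suc m) h \<bullet> G (Suc m))"
      using Suc.prems(9) by simp
    also have "\<dots> = pa (Pmap X m (cr h h) \<bullet> (Pmap X m (q0 A' A') \<bullet> G m)) (Pmap X m (cr h h) \<bullet> G (Suc m))"
      using F G Suc.prems(3-8) by (simp add: Pmap_Suc2)
    also have "\<dots> = Pmap X m (cr h h) \<bullet> T G m"
      using F G Suc.prems(3-8) by (simp add: T_eq[OF Suc.prems(2)])
    finally show ?thesis .
  qed
  have "(T ^^ n) (T F) 0 \<bullet> Pmap X n (cr k k) = Pmap X n (cr h h) \<bullet> (T ^^ n) (T G) 0"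
    by (rule Suc.IH[OF sq_T[OF Suc.prems(1)] sq_T[OF Suc.prems(2)] _ _ _ _ _ _ e])
       (use Suc.prems(3-8) in simp_all)
  then show ?case by (simp add: Pmap_Suc2)
qed

lemma T_sc: assumes f: "sq A B f" and g: "sq B C g" shows "T (sc f g) = sc (T f) (T g)"
proof
  fix m
  note fs = sqs[OF f] and gs = sqs[OF g]
  have fg: "sq A C (sc f g)" by (rule sq_sc[OF f g])
  note t = sqs[OF sq_Tn[OF sq_T[OF f], of m]] and t2 = sqs[OF sq_Tn[OF f, of m]]
  have kn: "(T ^^ m) (T f) 0 \<bullet> Pmap X m (q0 B B) = Pmap X m (q0 A A) \<bullet> (T ^^ m) f 0"
    by (rule KN[OF sq_T[OF f] f]) (use fs in \<open>simp_all add: T_eq[OF f]\<close>)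
  have "sc (T f) (T g) m = (T ^^ m) (T f) 0 \<bullet> pa (Pmap X m (q0 B B) \<bullet> g m) (g (Suc m))"
    by (simp add: sc_eq T_eq[OF g])
  also have "\<dots> = pa (((T ^^ m) (T f) 0 \<bullet> Pmap X m (q0 B B)) \<bullet> g m) ((T ^^ m) (T f) 0 \<bullet> g (Suc m))"
    using fs gs t by simp
  also have "\<dots> = pa ((Pmap X m (q0 A A) \<bullet> (T ^^ m) f 0) \<bullet> g m) ((T ^^ m) (T f) 0 \<bullet> g (Suc m))"
    by (simp only: kn)
  also have "\<dots> = T (sc f g) m"
    using fs gs t2 by (simp add: T_eq[OF fg] sc_eq)
  finally show "T (sc f g) m = sc (T f) (T g) m" by simp
qed

lemma Tn_sc: "sq A B f \<Longrightarrow> sq B C g \<Longrightarrow> (T ^^ n) (sc f g) = sc ((T ^^ n) f) ((T ^^ n) g)"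
proof (induction n arbitrary: A B C f g)
  case 0 then show ?case by simp
next
  case (Suc n)
  have "(T ^^ Suc n) (sc f g) = (T ^^ n) (sc (T f) (T g))" by (simp add: T_sc[OF Suc.prems])
  also have "\<dots> = sc ((T ^^ n) (T f)) ((T ^^ n) (T g))"
    by (rule Suc.IH[OF sq_T[OF Suc.prems(1)] sq_T[OF Suc.prems(2)]])
  finally show ?case by simp
qed

lemma sc_assoc: assumes f: "sq A B f" and g: "sq B C g" and h: "sq C D h"
  shows "sc (sc f g) h = sc f (sc g h)"
proof
  fix n
  note a = sqs[OF sq_Tn[OF f, of n]] and b = sqs[OF sq_Tn[OF g, of n]] and c = sqs[OF h]
  have "sc (sc f g) h n = ((T ^^ n) f 0 \<bullet> (T ^^ n) g 0) \<bullet> h n"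
    by (simp add: sc_eq Tn_sc[OF f g])
  also have "\<dots> = (T ^^ n) f 0 \<bullet> ((T ^^ n) g 0 \<bullet> h n)" by (rule asc) (use a b c in simp_all)
  also have "\<dots> = sc f (sc g h) n" by (simp only: sc_eq)
  finally show "sc (sc f g) h n = sc f (sc g h) n" .
qed

lemma lin_id: "A \<in> Ob \<Longrightarrow> lin A (ii A) = iq A"
  by (rule ext) (simp add: seq_post_def)

lemma sc_id_left: assumes f: "sq A B f" shows "sc (iq A) f = f"
proof
  fix n
  have A: "A \<in> Ob" using sqs[OF f] by simp
  have "(T ^^ n) (iq A) 0 = ii (Pn X n A)"
    using Tn0_lin[of "ii A" A n] A by (simp add: lin_id)
  then show "sc (iq A) f n = f n" using sqs[OF f] by (simp add: sc_eq)
qed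

lemma sc_id_right: assumes f: "sq A B f" shows "sc f (iq B) = f"
proof -
  have B: "B \<in> Ob" using sqs[OF f] by simp
  have "sc f (lin B (ii B)) = seq_post X f (ii B)" by (rule sc_lin_right[OF f]) (use B in simp_all)
  then show ?thesis using sqs[OF f] B by (simp add: lin_id seq_post_def)
qed

lemma sq_pre: "ar h \<Longrightarrow> cd h = A \<Longrightarrow> sq A B F \<Longrightarrow> sq (dm h) B (seq_pre X h F)"
  by (rule sqI) (simp_all add: seq_pre_def sqs)

lemma sq_post: "sq A B F \<Longrightarrow> ar k \<Longrightarrow> dm k = B \<Longrightarrow> sq A (cd k) (seq_post X F k)"
  by (rule sqI) (simp_all add: seq_post_def sqs)

lemma pre_sc: assumes h: "ar h" "cd h = A" and F: "sq A B F" and G: "sq B C G"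
  shows "seq_pre X h (sc F G) = sc (seq_pre X h F) G"
proof -
  have l: "sq (dm h) A (lin (dm h) h)" using sq_lin[of h "dm h"] h by simp
  have "seq_pre X h (sc F G) = sc (lin (dm h) h) (sc F G)" using h by (simp add: sc_lin_left)
  also have "\<dots> = sc (sc (lin (dm h) h) F) G" by (rule sc_assoc[OF l F G, symmetric])
  also have "\<dots> = sc (seq_pre X h F) G" using h by (simp add: sc_lin_left)
  finally show ?thesis .
qed

lemma post_sc: assumes F: "sq A B F" and k: "ar k" "dm k = B" "cd k = B'" and G: "sq B' C G"
  shows "sc (seq_post X F k) G = sc F (seq_pre X k G)"
proof -
  have l: "sq B B' (lin B k)" using sq_lin[of k B] k by simp
  have "sc (seq_post X F k) G = sc (sc F (lin B k)) G" using sc_lin_right[OF F k(1,2)] by simp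
  also have "\<dots> = sc F (sc (lin B k) G)" by (rule sc_assoc[OF F l G])
  also have "\<dots> = sc F (seq_pre X k G)" using k by (simp add: sc_lin_left)
  finally show ?thesis .
qed

lemma pre_pre: "ar h \<Longrightarrow> ar k \<Longrightarrow> cd h = dm k \<Longrightarrow> sq A B F \<Longrightarrow> cd k = A \<Longrightarrow>
   seq_pre X h (seq_pre X k F) = seq_pre X (h \<bullet> k) F"
  by (rule ext) (simp add: seq_pre_def sqs)

lemma Dpow: "(Dop ^^ m) f n = f (n + m)"
  by (induction m arbitrary: n) (simp_all add: funpow.simps(2) Dop_def)

lemma sq_D: "sq A B f \<Longrightarrow> sq (pr A A) B (Dop f)"
  by (rule sqI) (simp_all add: Dop_def sqs)

lemma sq_Dpow: "sq A B f \<Longrightarrow> sq (Pn X m A) B ((Dop ^^ m) f)"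
  by (rule sqI) (simp_all add: Dpow sqs)

lemma D_sc: "Dop (sc F G) = sc (T F) (Dop G)"
  by (rule ext) (simp add: Dop_def sc_eq)

lemma Dpow_sc: "(Dop ^^ m) (sc F G) = sc ((T ^^ m) F) ((Dop ^^ m) G)"
proof (induction m)
  case 0 then show ?case by simp
next
  case (Suc m) then show ?case by (simp add: funpow.simps(2) D_sc del: Tn_Suc)
qed

end
context cla begin

abbreviation i10 where "i10 C \<equiv> pa (ii C) (Z C C)"
abbreviation i01 where "i01 C \<equiv> pa (Z C C) (ii C)"
abbreviation sC where "sC C \<equiv> q0 C C \<oplus> q1 C C"

lemma sC_ar[simp]: "C \<in> Ob \<Longrightarrow> ar (sC C)" "C \<in> Ob \<Longrightarrow> dm (sC C) = pr C C" "C \<in> Ob \<Longrightarrow> cd (sC C) = C"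
  by simp_all

lemma ell_eq: "ell X C = cr (i10 C) (i01 C)" by (simp add: ell_def)
lemma cmid_eq: "cmid X C = pa (pa (q0 (pr C C) (pr C C) \<bullet> q0 C C) (q1 (pr C C) (pr C C) \<bullet> q0 C C))
                            (pa (q0 (pr C C) (pr C C) \<bullet> q1 C C) (q1 (pr C C) (pr C C) \<bullet> q1 C C))"
  by (simp add: cmid_def Let_def)

lemma ell_ar[simp]: "C \<in> Ob \<Longrightarrow> ar (ell X C)" "C \<in> Ob \<Longrightarrow> dm (ell X C) = pr C C"
  "C \<in> Ob \<Longrightarrow> cd (ell X C) = pr (pr C C) (pr C C)"
  by (simp_all add: ell_eq)
lemma cmid_ar[simp]: "C \<in> Ob \<Longrightarrow> ar (cmid X C)" "C \<in> Ob \<Longrightarrow> dm (cmid X C) = pr (pr C C) (pr C C)"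
  "C \<in> Ob \<Longrightarrow> cd (cmid X C) = pr (pr C C) (pr C C)"
  by (simp_all add: cmid_eq)

lemma N1: "addv z \<Longrightarrow> i10 (dm z) \<bullet> cr z z = z \<bullet> i10 (cd z)" by simp
lemma N1': "addv z \<Longrightarrow> i01 (dm z) \<bullet> cr z z = z \<bullet> i01 (cd z)" by simp
lemma N20: "ar z \<Longrightarrow> cr (ii (dm z)) (q0 (dm z) (dm z)) \<bullet> cr z z = cr z (cr z z) \<bullet> cr (ii (cd z)) (q0 (cd z) (cd z))"
  by simp
lemma N21: "ar z \<Longrightarrow> cr (ii (dm z)) (q1 (dm z) (dm z)) \<bullet> cr z z = cr z (cr z z) \<bullet> cr (ii (cd z)) (q1 (cd z) (cd z))"
  by simp
lemma N2: "addv z \<Longrightarrow> cr (ii (dm z)) (sC (dm z)) \<bullet> cr z z = cr z (cr z z) \<bullet> cr (ii (cd z)) (sC (cd z))"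
  by simp
lemma N3: "addv z \<Longrightarrow> ell X (dm z) \<bullet> cr (cr z z) (cr z z) = cr z z \<bullet> ell X (cd z)"
  by (simp add: ell_eq)
lemma N4: "ar z \<Longrightarrow> cmid X (dm z) \<bullet> cr (cr z z) (cr z z) = cr (cr z z) (cr z z) \<bullet> cmid X (cd z)"
  by (simp add: cmid_eq)


definition conds where
  "conds C B g1 g2 \<longleftrightarrow>
    seq_pre X (i10 C) g1 = seq_zero X C B \<and>
    seq_pre X (cr (ii C) (sC C)) g1 =
      seq_plus X (seq_pre X (cr (ii C) (q0 C C)) g1) (seq_pre X (cr (ii C) (q1 C C)) g1) \<and>
    seq_pre X (ell X C) g2 = g1 \<and> seq_pre X (cmid X C) g2 = g2"

lemma Dseq_iff: "is_Dseq X A B f \<longleftrightarrow> sq A B f \<and>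
   (\<forall>n. conds (Pn X n A) B ((Dop ^^ Suc n) f) ((Dop ^^ Suc (Suc n)) f))"
  unfolding is_Dseq_def is_pre_Dseq_def conds_def Let_def sq_def H_iff by blast

lemma Dseq_sq: "is_Dseq X A B f \<Longrightarrow> sq A B f" by (simp add: Dseq_iff)
lemma Dseq_cond: "is_Dseq X A B f \<Longrightarrow> conds (Pn X n A) B ((Dop ^^ Suc n) f) ((Dop ^^ Suc (Suc n)) f)"
  by (simp add: Dseq_iff)

lemma Dpow_Suc: "(Dop ^^ Suc n) f = Dop ((Dop ^^ n) f)" by (simp add: funpow.simps(2))
lemma Dpow_add: "(Dop ^^ a) ((Dop ^^ b) f) = (Dop ^^ (a + b)) f" by (simp add: funpow_add)

lemma Dseq_shift: assumes f: "is_Dseq X A B f" shows "is_Dseq X (Pn X m A) B ((Dop ^^ m) f)"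
  unfolding Dseq_iff
proof (intro conjI allI)
  show "sq (Pn X m A) B ((Dop ^^ m) f)" by (rule sq_Dpow[OF Dseq_sq[OF f]])
  fix n
  have "conds (Pn X (n + m) A) B ((Dop ^^ Suc (n + m)) f) ((Dop ^^ Suc (Suc (n + m))) f)"
    by (rule Dseq_cond[OF f])
  then show "conds (Pn X n (Pn X m A)) B ((Dop ^^ Suc n) ((Dop ^^ m) f)) ((Dop ^^ Suc (Suc n)) ((Dop ^^ m) f))"
    by (simp add: Dpow_add)
qed

lemma Dseq_D: assumes f: "is_Dseq X A B f" shows "is_Dseq X (pr A A) B (Dop f)"
  using Dseq_shift[OF f, of 1] by (simp add: funpow.simps(2))

definition PS where "PS y U V = (\<lambda>k. pa (Pmap X k y \<bullet> U k) (V k))"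

lemma sq_PS: "ar y \<Longrightarrow> sq (cd y) B U \<Longrightarrow> sq (dm y) B' V \<Longrightarrow> sq (dm y) (pr B B') (PS y U V)"
  by (rule sqI) (simp_all add: PS_def sqs)

lemma pre_PS: "ar h \<Longrightarrow> cd h = dm y \<Longrightarrow> ar y \<Longrightarrow> sq (cd y) B U \<Longrightarrow> sq (dm y) B' V \<Longrightarrow>
   seq_pre X h (PS y U V) = PS (h \<bullet> y) U (seq_pre X h V)"
  by (rule ext) (simp add: PS_def seq_pre_def sqs)

lemma PS_comp: "ar y \<Longrightarrow> ar h \<Longrightarrow> cd y = dm h \<Longrightarrow> sq (cd h) B U \<Longrightarrow>
   PS (y \<bullet> h) U V = PS y (seq_pre X h U) V"
  by (rule ext) (simp add: PS_def seq_pre_def sqs)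

lemma PS_plus: "ar y \<Longrightarrow> sq (cd y) B U1 \<Longrightarrow> sq (cd y) B U2 \<Longrightarrow> sq (dm y) B' V1 \<Longrightarrow> sq (dm y) B' V2 \<Longrightarrow>
   seq_plus X (PS y U1 V1) (PS y U2 V2) = PS y (seq_plus X U1 U2) (seq_plus X V1 V2)"
  by (rule ext) (simp add: PS_def seq_plus_def sqs pplus)

lemma PS_zero: "ar y \<Longrightarrow> B \<in> Ob \<Longrightarrow> B' \<in> Ob \<Longrightarrow>
   PS y (seq_zero X (cd y) B) (seq_zero X (dm y) B') = seq_zero X (dm y) (pr B B')"
  by (rule ext) (simp add: PS_def seq_zero_def pzero2)

lemma T_PS: "sq A B F \<Longrightarrow> T F = PS (q0 A A) F (Dop F)"
  by (rule ext) (simp add: PS_def T_eq Dop_def)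

lemma DT_PS: "sq A B F \<Longrightarrow> (Dop ^^ j) (T F) = PS (Pmap X j (q0 A A)) ((Dop ^^ j) F) ((Dop ^^ Suc j) F)"
  by (rule ext) (simp add: PS_def T_eq Dpow)

lemma sq_zero: "C \<in> Ob \<Longrightarrow> B \<in> Ob \<Longrightarrow> sq C B (seq_zero X C B)"
  by (rule sqI) (simp_all add: seq_zero_def)

lemma sq_plus: "sq C B f \<Longrightarrow> sq C B g \<Longrightarrow> sq C B (seq_plus X f g)"
  by (rule sqI) (simp_all add: seq_plus_def sqs)

lemma sc_plus_right: "sq A B F \<Longrightarrow> sq B C G \<Longrightarrow> sq B C K \<Longrightarrow>
   sc F (seq_plus X G K) = seq_plus X (sc F G) (sc F K)"
proof
  fix n assume a: "sq A B F" "sq B C G" "sq B C K"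
  show "sc F (seq_plus X G K) n = seq_plus X (sc F G) (sc F K) n"
    using sqs[OF sq_Tn[OF a(1), of n]] sqs[OF a(2)] sqs[OF a(3)] by (simp add: sc_eq seq_plus_def)
qed

lemma sc_zero_right: "sq A B F \<Longrightarrow> C \<in> Ob \<Longrightarrow> sc F (seq_zero X B C) = seq_zero X A C"
proof
  fix n assume a: "sq A B F" "C \<in> Ob"
  show "sc F (seq_zero X B C) n = seq_zero X A C n"
    using sqs[OF sq_Tn[OF a(1), of n]] a(2) by (simp add: sc_eq seq_zero_def)
qed

end
context cla begin

lemma M1: assumes F: "is_Dseq X A B F" shows "is_Dseq X (pr A A) (pr B B) (T F)"
  unfolding Dseq_iff
proof (intro conjI allI)
  have sF: "sq A B F" by (rule Dseq_sq[OF F])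
  note s = sqs[OF sF]
  show "sq (pr A A) (pr B B) (T F)" by (rule sq_T[OF sF])
  fix m
  define C where "C = Pn X m A"
  define z where "z = Pmap X m (q0 A A)"
  define y where "y = cr z z"
  define U where "U = (Dop ^^ Suc m) F"
  define V where "V = (Dop ^^ Suc (Suc m)) F"
  define W where "W = (Dop ^^ Suc (Suc (Suc m))) F"
  have C: "C \<in> Ob" using s by (simp add: C_def)
  have z: "addv z" "ar z" "dm z = pr C C" "cd z = C" using s by (simp_all add: z_def C_def)
  have y: "ar y" "dm y = pr (pr C C) (pr C C)" "cd y = pr C C" using z by (simp_all add: y_def)
  have sU: "sq (pr C C) B U" using sq_Dpow[OF sF, of "Suc m"] by (simp add: U_def C_def)
  have sV: "sq (pr (pr C C) (pr C C)) B V" using sq_Dpow[OF sF, of "Suc (Suc m)"] by (simp add: V_def C_def)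
  have sW: "sq (pr (pr (pr C C) (pr C C)) (pr (pr C C) (pr C C))) B W"
    using sq_Dpow[OF sF, of "Suc (Suc (Suc m))"] by (simp add: W_def C_def)
  have g1: "(Dop ^^ Suc m) (T F) = PS y U V"
    using DT_PS[OF sF, of "Suc m"] by (simp add: U_def V_def y_def z_def Pmap_Suc)
  have g2: "(Dop ^^ Suc (Suc m)) (T F) = PS (cr y y) V W"
    using DT_PS[OF sF, of "Suc (Suc m)"] by (simp add: W_def V_def y_def z_def Pmap_Suc)
  have cm: "conds C B U V" using Dseq_cond[OF F, of m] by (simp add: U_def V_def C_def)
  have cm1: "conds (pr C C) B V W" using Dseq_cond[OF F, of "Suc m"] by (simp add: W_def V_def C_def)
  note cm = cm[unfolded conds_def] and cm1 = cm1[unfolded conds_def]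
  have n1: "i10 (pr C C) \<bullet> y = z \<bullet> i10 C" using N1[OF z(1)] z by (simp add: y_def)
  have n2: "cr (ii (pr C C)) (sC (pr C C)) \<bullet> y = cr z y \<bullet> cr (ii C) (sC C)"
    using N2[OF z(1)] z by (simp add: y_def)
  have n20: "cr (ii (pr C C)) (q0 (pr C C) (pr C C)) \<bullet> y = cr z y \<bullet> cr (ii C) (q0 C C)"
    using N20[OF z(2)] z by (simp add: y_def)
  have n21: "cr (ii (pr C C)) (q1 (pr C C) (pr C C)) \<bullet> y = cr z y \<bullet> cr (ii C) (q1 C C)"
    using N21[OF z(2)] z by (simp add: y_def)
  have n3: "ell X (pr C C) \<bullet> cr y y = y \<bullet> ell X C" using N3[OF z(1)] z by (simp add: y_def)
  have n4: "cmid X (pr C C) \<bullet> cr y y = cr y y \<bullet> cmid X C" using N4[OF z(2)] z by (simp add: y_def)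
  have w: "ar (cr z y)" "dm (cr z y) = pr (pr C C) (pr (pr C C) (pr C C))" "cd (cr z y) = pr C (pr C C)"
    using z y by simp_all
  have c1: "seq_pre X (i10 (pr C C)) (PS y U V) = seq_zero X (pr C C) (pr B B)"
  proof -
    have "seq_pre X (i10 (pr C C)) (PS y U V) = PS (i10 (pr C C) \<bullet> y) U (seq_pre X (i10 (pr C C)) V)"
      by (rule pre_PS) (use y C sU sV in simp_all)
    also have "\<dots> = PS (z \<bullet> i10 C) U (seq_zero X (pr C C) B)" using n1 cm1 by simp
    also have "\<dots> = PS z (seq_pre X (i10 C) U) (seq_zero X (pr C C) B)"
      by (rule PS_comp) (use z C sU in simp_all)
    also have "\<dots> = PS z (seq_zero X C B) (seq_zero X (pr C C) B)" using cm by simp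
    also have "\<dots> = seq_zero X (pr C C) (pr B B)" using PS_zero[of z B B] z s by simp
    finally show ?thesis .
  qed
  have pj: "seq_pre X (cr (ii (pr C C)) (qq (pr C C) (pr C C))) (PS y U V) =
            PS (cr z y) (seq_pre X (cr (ii C) (qq C C)) U) (seq_pre X (cr (ii (pr C C)) (qq (pr C C) (pr C C))) V)"
    if "qq = q0 \<or> qq = q1" for qq
  proof -
    have a: "ar (qq (pr C C) (pr C C))" "dm (qq (pr C C) (pr C C)) = pr (pr C C) (pr C C)"
      "cd (qq (pr C C) (pr C C)) = pr C C" "ar (qq C C)" "dm (qq C C) = pr C C" "cd (qq C C) = C"
      using that C by auto
    have nn: "cr (ii (pr C C)) (qq (pr C C) (pr C C)) \<bullet> y = cr z y \<bullet> cr (ii C) (qq C C)"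
      using that n20 n21 by auto
    have "seq_pre X (cr (ii (pr C C)) (qq (pr C C) (pr C C))) (PS y U V)
        = PS (cr (ii (pr C C)) (qq (pr C C) (pr C C)) \<bullet> y) U (seq_pre X (cr (ii (pr C C)) (qq (pr C C) (pr C C))) V)"
      by (rule pre_PS) (use y C sU sV a in simp_all)
    also have "\<dots> = PS (cr z y) (seq_pre X (cr (ii C) (qq C C)) U) (seq_pre X (cr (ii (pr C C)) (qq (pr C C) (pr C C))) V)"
      unfolding nn by (rule PS_comp) (use z y C sU a in simp_all)
    finally show ?thesis .
  qed
  have sUj: "sq (pr C (pr C C)) B (seq_pre X (cr (ii C) (qq C C)) U)" if "qq = q0 \<or> qq = q1" for qq
    using sq_pre[OF _ _ sU, of "cr (ii C) (qq C C)"] that C by auto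
  have sVj: "sq (pr (pr C C) (pr (pr C C) (pr C C))) B (seq_pre X (cr (ii (pr C C)) (qq (pr C C) (pr C C))) V)"
    if "qq = q0 \<or> qq = q1" for qq
    using sq_pre[OF _ _ sV, of "cr (ii (pr C C)) (qq (pr C C) (pr C C))"] that C by auto
  have c2: "seq_pre X (cr (ii (pr C C)) (sC (pr C C))) (PS y U V) =
     seq_plus X (seq_pre X (cr (ii (pr C C)) (q0 (pr C C) (pr C C))) (PS y U V))
                (seq_pre X (cr (ii (pr C C)) (q1 (pr C C) (pr C C))) (PS y U V))"
  proof -
    have "seq_pre X (cr (ii (pr C C)) (sC (pr C C))) (PS y U V)
       = PS (cr (ii (pr C C)) (sC (pr C C)) \<bullet> y) U (seq_pre X (cr (ii (pr C C)) (sC (pr C C))) V)"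
      by (rule pre_PS) (use y C sU sV in simp_all)
    also have "\<dots> = PS (cr z y \<bullet> cr (ii C) (sC C)) U (seq_pre X (cr (ii (pr C C)) (sC (pr C C))) V)"
      by (simp only: n2)
    also have "\<dots> = PS (cr z y) (seq_pre X (cr (ii C) (sC C)) U) (seq_pre X (cr (ii (pr C C)) (sC (pr C C))) V)"
      by (rule PS_comp) (use z y C sU in simp_all)
    also have "\<dots> = PS (cr z y)
        (seq_plus X (seq_pre X (cr (ii C) (q0 C C)) U) (seq_pre X (cr (ii C) (q1 C C)) U))
        (seq_plus X (seq_pre X (cr (ii (pr C C)) (q0 (pr C C) (pr C C))) V) (seq_pre X (cr (ii (pr C C)) (q1 (pr C C) (pr C C))) V))"
      using cm cm1 by simp
    also have "\<dots> = seq_plus X (PS (cr z y) (seq_pre X (cr (ii C) (q0 C C)) U) (seq_pre X (cr (ii (pr C C)) (q0 (pr C C) (pr C C))) V))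
                               (PS (cr z y) (seq_pre X (cr (ii C) (q1 C C)) U) (seq_pre X (cr (ii (pr C C)) (q1 (pr C C) (pr C C))) V))"
      by (rule PS_plus[symmetric, where B=B and B'=B]) (use w sUj sVj in simp_all)
    also have "\<dots> = seq_plus X (seq_pre X (cr (ii (pr C C)) (q0 (pr C C) (pr C C))) (PS y U V))
                (seq_pre X (cr (ii (pr C C)) (q1 (pr C C) (pr C C))) (PS y U V))"
      using pj[of q0] pj[of q1] by simp
    finally show ?thesis .
  qed
  have c3: "seq_pre X (ell X (pr C C)) (PS (cr y y) V W) = PS y U V"
  proof -
    have "seq_pre X (ell X (pr C C)) (PS (cr y y) V W) = PS (ell X (pr C C) \<bullet> cr y y) V (seq_pre X (ell X (pr C C)) W)"
      by (rule pre_PS) (use y C sV sW in simp_all)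
    also have "\<dots> = PS (y \<bullet> ell X C) V V" using n3 cm1 by simp
    also have "\<dots> = PS y (seq_pre X (ell X C) V) V" by (rule PS_comp) (use y C sV in simp_all)
    also have "\<dots> = PS y U V" using cm by simp
    finally show ?thesis .
  qed
  have c4: "seq_pre X (cmid X (pr C C)) (PS (cr y y) V W) = PS (cr y y) V W"
  proof -
    have "seq_pre X (cmid X (pr C C)) (PS (cr y y) V W) = PS (cmid X (pr C C) \<bullet> cr y y) V (seq_pre X (cmid X (pr C C)) W)"
      by (rule pre_PS) (use y C sV sW in simp_all)
    also have "\<dots> = PS (cr y y \<bullet> cmid X C) V W" using n4 cm1 by simp
    also have "\<dots> = PS (cr y y) (seq_pre X (cmid X C) V) W" by (rule PS_comp) (use y C sV in simp_all)
    also have "\<dots> = PS (cr y y) V W" using cm by simp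
    finally show ?thesis .
  qed
  show "conds (Pn X m (pr A A)) (pr B B) ((Dop ^^ Suc m) (T F)) ((Dop ^^ Suc (Suc m)) (T F))"
    unfolding g1 g2 conds_def using c1 c2 c3 c4 by (simp add: C_def)
qed

end
context cla begin

lemma LIN:
  assumes y: "ar y" and yd: "dm y = D" "cd y = E" and P0: "sq E B P" and a00: "sq D B a0" and a10: "sq D B a1"
    and Hs: "sq (pr B B) C K"
    and c: "seq_pre X (cr (ii B) (sC B)) K =
      seq_plus X (seq_pre X (cr (ii B) (q0 B B)) K) (seq_pre X (cr (ii B) (q1 B B)) K)"
  shows "sc (PS y P (seq_plus X a0 a1)) K = seq_plus X (sc (PS y P a0) K) (sc (PS y P a1) K)"
proof -
  have P: "sq (cd y) B P" and a0: "sq (dm y) B a0" and a1: "sq (dm y) B a1" using P0 a00 a10 yd by auto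
  note sp = sqs[OF P] and s0 = sqs[OF a0] and s1 = sqs[OF a1]
  have B: "B \<in> Ob" using sp by simp
  define Q where "Q = (\<lambda>k. pa (Pmap X k y \<bullet> P k) (pa (a0 k) (a1 k)))"
  have sQ: "sq (dm y) (pr B (pr B B)) Q" by (rule sqI) (use y sp s0 s1 in \<open>simp_all add: Q_def\<close>)
  have e: "seq_post X Q (cr (ii B) (sC B)) = PS y P (seq_plus X a0 a1)"
    by (rule ext) (use y sp s0 s1 in \<open>simp add: Q_def PS_def seq_post_def seq_plus_def\<close>)
  have e0: "seq_post X Q (cr (ii B) (q0 B B)) = PS y P a0"
    by (rule ext) (use y sp s0 s1 in \<open>simp add: Q_def PS_def seq_post_def\<close>)
  have e1: "seq_post X Q (cr (ii B) (q1 B B)) = PS y P a1"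
    by (rule ext) (use y sp s0 s1 in \<open>simp add: Q_def PS_def seq_post_def\<close>)
  have sH0: "sq (pr B (pr B B)) C (seq_pre X (cr (ii B) (q0 B B)) K)"
    using sq_pre[OF _ _ Hs, of "cr (ii B) (q0 B B)"] B by simp
  have sH1: "sq (pr B (pr B B)) C (seq_pre X (cr (ii B) (q1 B B)) K)"
    using sq_pre[OF _ _ Hs, of "cr (ii B) (q1 B B)"] B by simp
  have "sc (PS y P (seq_plus X a0 a1)) K = sc (seq_post X Q (cr (ii B) (sC B))) K" by (simp only: e)
  also have "\<dots> = sc Q (seq_pre X (cr (ii B) (sC B)) K)" by (rule post_sc[OF sQ _ _ _ Hs]) (use B in simp_all)
  also have "\<dots> = seq_plus X (sc Q (seq_pre X (cr (ii B) (q0 B B)) K)) (sc Q (seq_pre X (cr (ii B) (q1 B B)) K))"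
    unfolding c by (rule sc_plus_right[OF sQ sH0 sH1])
  also have "\<dots> = seq_plus X (sc (seq_post X Q (cr (ii B) (q0 B B))) K) (sc (seq_post X Q (cr (ii B) (q1 B B))) K)"
    using post_sc[OF sQ _ _ _ Hs, of "cr (ii B) (q0 B B)"] post_sc[OF sQ _ _ _ Hs, of "cr (ii B) (q1 B B)"] B by simp
  also have "\<dots> = seq_plus X (sc (PS y P a0) K) (sc (PS y P a1) K)" by (simp only: e0 e1)
  finally show ?thesis .
qed

lemma D1: "(Dop ^^ Suc 0) f = Dop f" by (simp add: Dpow_Suc)
lemma D2: "(Dop ^^ Suc (Suc 0)) f = Dop (Dop f)" by (simp add: Dpow_Suc)

lemma cond0: "is_Dseq X A B F \<Longrightarrow> conds A B (Dop F) (Dop (Dop F))"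
  using Dseq_cond[of A B F 0] by (simp only: D1 D2 Pn_0)

lemma M2: assumes F: "is_Dseq X A B F" and G: "is_Dseq X B C G"
  shows "conds A C (sc (T F) (Dop G)) (sc (T (T F)) (Dop (Dop G)))"
proof -
  have sF: "sq A B F" and sG: "sq B C G" using Dseq_sq F G by auto
  note s = sqs[OF sF] and t = sqs[OF sG]
  have A: "A \<in> Ob" and B: "B \<in> Ob" and C: "C \<in> Ob" using s t by auto
  note cF = cond0[OF F, unfolded conds_def] and cG = cond0[OF G, unfolded conds_def]
  have sTF: "sq (pr A A) (pr B B) (T F)" by (rule sq_T[OF sF])
  have sTTF: "sq (pr (pr A A) (pr A A)) (pr (pr B B) (pr B B)) (T (T F))" by (rule sq_T[OF sTF])
  have sDF: "sq (pr A A) B (Dop F)" by (rule sq_D[OF sF])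
  have sDDF: "sq (pr (pr A A) (pr A A)) B (Dop (Dop F))" by (rule sq_D[OF sDF])
  have sDG: "sq (pr B B) C (Dop G)" by (rule sq_D[OF sG])
  have sDDG: "sq (pr (pr B B) (pr B B)) C (Dop (Dop G))" by (rule sq_D[OF sDG])
  have TF: "T F = PS (q0 A A) F (Dop F)" by (rule T_PS[OF sF])
  have TTF: "T (T F) = PS (q0 (pr A A) (pr A A)) (T F) (Dop (T F))" by (rule T_PS[OF sTF])
  have DTF: "Dop (T F) = PS (cr (q0 A A) (q0 A A)) (Dop F) (Dop (Dop F))"
    using DT_PS[OF sF, of 1] by (simp add: D1 D2 Pmap_Suc)
  have La: "seq_pre X (i10 A) (T F) = PS (ii A) F (seq_zero X A B)"
  proof -
    have "seq_pre X (i10 A) (T F) = PS (i10 A \<bullet> q0 A A) F (seq_pre X (i10 A) (Dop F))"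
      unfolding TF by (rule pre_PS) (use A sF sDF in simp_all)
    then show ?thesis using cF A by simp
  qed
  have La': "PS (ii A) F (seq_zero X A B) = seq_post X F (i10 B)"
    by (rule ext) (use s in \<open>simp add: PS_def seq_post_def seq_zero_def\<close>)
  have c1: "seq_pre X (i10 A) (sc (T F) (Dop G)) = seq_zero X A C"
  proof -
    have "seq_pre X (i10 A) (sc (T F) (Dop G)) = sc (seq_pre X (i10 A) (T F)) (Dop G)"
      by (rule pre_sc[OF _ _ sTF sDG]) (use A in simp_all)
    also have "\<dots> = sc (seq_post X F (i10 B)) (Dop G)" by (simp only: La La')
    also have "\<dots> = sc F (seq_pre X (i10 B) (Dop G))" by (rule post_sc[OF sF _ _ _ sDG]) (use B in simp_all)
    also have "\<dots> = sc F (seq_zero X B C)" using cG by simp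
    also have "\<dots> = seq_zero X A C" by (rule sc_zero_right[OF sF C])
    finally show ?thesis .
  qed
  have Lbj: "seq_pre X (cr (ii A) (qq A A)) (T F) = PS (q0 A (pr A A)) F (seq_pre X (cr (ii A) (qq A A)) (Dop F))"
    if "qq = q0 \<or> qq = q1" for qq
  proof -
    have a: "ar (qq A A)" "dm (qq A A) = pr A A" "cd (qq A A) = A" using that A by auto
    have "seq_pre X (cr (ii A) (qq A A)) (T F) = PS (cr (ii A) (qq A A) \<bullet> q0 A A) F (seq_pre X (cr (ii A) (qq A A)) (Dop F))"
      unfolding TF by (rule pre_PS) (use A sF sDF a in simp_all)
    then show ?thesis using A a by simp
  qed
  have Lb: "seq_pre X (cr (ii A) (sC A)) (T F) = PS (q0 A (pr A A)) F
     (seq_plus X (seq_pre X (cr (ii A) (q0 A A)) (Dop F)) (seq_pre X (cr (ii A) (q1 A A)) (Dop F)))"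
  proof -
    have "seq_pre X (cr (ii A) (sC A)) (T F) = PS (cr (ii A) (sC A) \<bullet> q0 A A) F (seq_pre X (cr (ii A) (sC A)) (Dop F))"
      unfolding TF by (rule pre_PS) (use A sF sDF in simp_all)
    then show ?thesis using A cF by simp
  qed
  have sDFj: "sq (pr A (pr A A)) B (seq_pre X (cr (ii A) (qq A A)) (Dop F))" if "qq = q0 \<or> qq = q1" for qq
    using sq_pre[OF _ _ sDF, of "cr (ii A) (qq A A)"] that A by auto
  have sDF0: "sq (pr A (pr A A)) B (seq_pre X (cr (ii A) (q0 A A)) (Dop F))" using sDFj[of q0] by simp
  have sDF1: "sq (pr A (pr A A)) B (seq_pre X (cr (ii A) (q1 A A)) (Dop F))" using sDFj[of q1] by simp
  have c2: "seq_pre X (cr (ii A) (sC A)) (sc (T F) (Dop G)) =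
      seq_plus X (seq_pre X (cr (ii A) (q0 A A)) (sc (T F) (Dop G))) (seq_pre X (cr (ii A) (q1 A A)) (sc (T F) (Dop G)))"
  proof -
    have pj: "seq_pre X (cr (ii A) (qq A A)) (sc (T F) (Dop G)) = sc (seq_pre X (cr (ii A) (qq A A)) (T F)) (Dop G)"
      if "qq = q0 \<or> qq = q1" for qq
      by (rule pre_sc[OF _ _ sTF sDG]) (use A that in auto)
    have "seq_pre X (cr (ii A) (sC A)) (sc (T F) (Dop G)) = sc (seq_pre X (cr (ii A) (sC A)) (T F)) (Dop G)"
      by (rule pre_sc[OF _ _ sTF sDG]) (use A in simp_all)
    also have "\<dots> = seq_plus X (sc (PS (q0 A (pr A A)) F (seq_pre X (cr (ii A) (q0 A A)) (Dop F))) (Dop G))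
                               (sc (PS (q0 A (pr A A)) F (seq_pre X (cr (ii A) (q1 A A)) (Dop F))) (Dop G))"
      unfolding Lb by (rule LIN[OF _ _ _ _ sDF0 sDF1 sDG]) (use A sF cG in simp_all)
    also have "\<dots> = seq_plus X (seq_pre X (cr (ii A) (q0 A A)) (sc (T F) (Dop G))) (seq_pre X (cr (ii A) (q1 A A)) (sc (T F) (Dop G)))"
      using pj[of q0] pj[of q1] Lbj[of q0] Lbj[of q1] by simp
    finally show ?thesis .
  qed
  have e1: "ell X A \<bullet> cr (q0 A A) (q0 A A) = q0 A A \<bullet> i10 A"
    by (rule pext[of A A]) (use A in \<open>simp_all add: ell_eq\<close>)
  have Lc: "seq_pre X (ell X A) (T (T F)) = seq_post X (T F) (ell X B)"
  proof -
    have "seq_pre X (ell X A) (T (T F)) = PS (ell X A \<bullet> q0 (pr A A) (pr A A)) (T F) (seq_pre X (ell X A) (Dop (T F)))"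
      unfolding TTF by (rule pre_PS) (use A sTF sq_D[OF sTF] in simp_all)
    also have "\<dots> = PS (q0 A A \<bullet> i10 A) (T F) (seq_pre X (ell X A) (Dop (T F)))"
      using A by (simp add: ell_eq)
    also have "\<dots> = PS (q0 A A) (seq_pre X (i10 A) (T F)) (seq_pre X (ell X A) (Dop (T F)))"
      by (rule PS_comp) (use A sTF in simp_all)
    also have "seq_pre X (ell X A) (Dop (T F)) = PS (ell X A \<bullet> cr (q0 A A) (q0 A A)) (Dop F) (seq_pre X (ell X A) (Dop (Dop F)))"
      unfolding DTF by (rule pre_PS) (use A sDF sDDF in simp_all)
    also have "\<dots> = PS (q0 A A \<bullet> i10 A) (Dop F) (Dop F)" using e1 cF by simp
    also have "\<dots> = PS (q0 A A) (seq_pre X (i10 A) (Dop F)) (Dop F)"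
      by (rule PS_comp) (use A sDF in simp_all)
    also have "\<dots> = PS (q0 A A) (seq_zero X A B) (Dop F)" using cF by simp
    finally have "seq_pre X (ell X A) (T (T F)) = PS (q0 A A) (PS (ii A) F (seq_zero X A B)) (PS (q0 A A) (seq_zero X A B) (Dop F))"
      by (simp only: La)
    also have "\<dots> = seq_post X (T F) (ell X B)"
    proof
      fix k
      show "PS (q0 A A) (PS (ii A) F (seq_zero X A B)) (PS (q0 A A) (seq_zero X A B) (Dop F)) k = seq_post X (T F) (ell X B) k"
        using s sqs[OF sDF] A B by (simp add: PS_def seq_post_def seq_zero_def T_eq[OF sF] ell_eq Dop_def)
    qed
    finally show ?thesis .
  qed
  have c3: "seq_pre X (ell X A) (sc (T (T F)) (Dop (Dop G))) = sc (T F) (Dop G)"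
  proof -
    have "seq_pre X (ell X A) (sc (T (T F)) (Dop (Dop G))) = sc (seq_pre X (ell X A) (T (T F))) (Dop (Dop G))"
      by (rule pre_sc[OF _ _ sTTF sDDG]) (use A in simp_all)
    also have "\<dots> = sc (seq_post X (T F) (ell X B)) (Dop (Dop G))" by (simp only: Lc)
    also have "\<dots> = sc (T F) (seq_pre X (ell X B) (Dop (Dop G)))" by (rule post_sc[OF sTF _ _ _ sDDG]) (use B in simp_all)
    also have "\<dots> = sc (T F) (Dop G)" using cG by simp
    finally show ?thesis .
  qed
  have e2: "cmid X A \<bullet> q0 (pr A A) (pr A A) = cr (q0 A A) (q0 A A)"
    using A by (simp add: cmid_eq cross_def)
  have e3: "cmid X A \<bullet> cr (q0 A A) (q0 A A) = q0 (pr A A) (pr A A)"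
    by (rule pext[of A A]) (use A in \<open>simp_all add: cmid_eq\<close>)
  have Ld: "seq_pre X (cmid X A) (T (T F)) = seq_post X (T (T F)) (cmid X B)"
  proof -
    have "seq_pre X (cmid X A) (T (T F)) = PS (cmid X A \<bullet> q0 (pr A A) (pr A A)) (T F) (seq_pre X (cmid X A) (Dop (T F)))"
      unfolding TTF by (rule pre_PS) (use A sTF sq_D[OF sTF] in simp_all)
    also have "seq_pre X (cmid X A) (Dop (T F)) = PS (cmid X A \<bullet> cr (q0 A A) (q0 A A)) (Dop F) (seq_pre X (cmid X A) (Dop (Dop F)))"
      unfolding DTF by (rule pre_PS) (use A sDF sDDF in simp_all)
    finally have "seq_pre X (cmid X A) (T (T F)) = PS (cr (q0 A A) (q0 A A)) (T F) (PS (q0 (pr A A) (pr A A)) (Dop F) (Dop (Dop F)))"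
      using e2 e3 cF by simp
    also have "\<dots> = seq_post X (T (T F)) (cmid X B)"
    proof
      fix k
      show "PS (cr (q0 A A) (q0 A A)) (T F) (PS (q0 (pr A A) (pr A A)) (Dop F) (Dop (Dop F))) k = seq_post X (T (T F)) (cmid X B) k"
        using s A B
        by (simp add: PS_def seq_post_def cmid_eq T_eq[OF sTF] T_eq[OF sF] Dop_def Pmap_Suc2)
    qed
    finally show ?thesis .
  qed
  have c4: "seq_pre X (cmid X A) (sc (T (T F)) (Dop (Dop G))) = sc (T (T F)) (Dop (Dop G))"
  proof -
    have "seq_pre X (cmid X A) (sc (T (T F)) (Dop (Dop G))) = sc (seq_pre X (cmid X A) (T (T F))) (Dop (Dop G))"
      by (rule pre_sc[OF _ _ sTTF sDDG]) (use A in simp_all)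
    also have "\<dots> = sc (seq_post X (T (T F)) (cmid X B)) (Dop (Dop G))" by (simp only: Ld)
    also have "\<dots> = sc (T (T F)) (seq_pre X (cmid X B) (Dop (Dop G)))" by (rule post_sc[OF sTTF _ _ _ sDDG]) (use B in simp_all)
    also have "\<dots> = sc (T (T F)) (Dop (Dop G))" using cG by simp
    finally show ?thesis .
  qed
  show ?thesis unfolding conds_def using c1 c2 c3 c4 by blast
qed

end
context cla begin

lemma Tn_Suc2: "(T ^^ Suc n) f = T ((T ^^ n) f)" by (simp only: funpow.simps(2) comp_def)

lemma Dseq_Tn: "is_Dseq X A B f \<Longrightarrow> is_Dseq X (Pn X n A) (Pn X n B) ((T ^^ n) f)"
proof (induction n)
  case 0 then show ?case by simp
next
  case (Suc n)
  have "is_Dseq X (pr (Pn X n A) (Pn X n A)) (pr (Pn X n B) (Pn X n B)) (T ((T ^^ n) f))"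
    by (rule M1[OF Suc.IH[OF Suc.prems]])
  then show ?case by (simp only: Tn_Suc2 Pn_Suc)
qed

lemma Dseq_sc: assumes f: "is_Dseq X A B f" and g: "is_Dseq X B C g" shows "is_Dseq X A C (sc f g)"
  unfolding Dseq_iff
proof (intro conjI allI)
  show "sq A C (sc f g)" by (rule sq_sc[OF Dseq_sq[OF f] Dseq_sq[OF g]])
  fix n
  have "conds (Pn X n A) C (sc (T ((T ^^ n) f)) (Dop ((Dop ^^ n) g))) (sc (T (T ((T ^^ n) f))) (Dop (Dop ((Dop ^^ n) g))))"
    by (rule M2[OF Dseq_Tn[OF f] Dseq_shift[OF g]])
  then show "conds (Pn X n A) C ((Dop ^^ Suc n) (sc f g)) ((Dop ^^ Suc (Suc n)) (sc f g))"
    by (simp only: Dpow_sc Tn_Suc2 Dpow_Suc)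
qed

lemma pre_lin: "ar k \<Longrightarrow> cd k = D \<Longrightarrow> ar u \<Longrightarrow> dm u = D \<Longrightarrow> seq_pre X k (lin D u) = lin (dm k) (k \<bullet> u)"
  by (rule ext) (use ar_dm[of u] in \<open>simp add: seq_pre_def seq_post_def\<close>)

lemma lin_plus: "ar u \<Longrightarrow> ar v \<Longrightarrow> dm u = D \<Longrightarrow> dm v = D \<Longrightarrow> cd u = cd v \<Longrightarrow>
  seq_plus X (lin D u) (lin D v) = lin D (u \<oplus> v)"
  by (rule ext) (use ar_dm[of u] in \<open>simp add: seq_plus_def seq_post_def\<close>)

lemma lin_zero: "C \<in> Ob \<Longrightarrow> B \<in> Ob \<Longrightarrow> lin C (Z C B) = seq_zero X C B"
  by (rule ext) (simp add: seq_zero_def seq_post_def)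

lemma lin_pair: "ar u \<Longrightarrow> ar v \<Longrightarrow> dm u = D \<Longrightarrow> dm v = D \<Longrightarrow>
  (\<lambda>n. pa (lin D u n) (lin D v n)) = lin D (pa u v)"
  by (rule ext) (use ar_dm[of u] in \<open>simp add: seq_post_def\<close>)

lemma Dpow_lin: "ar h \<Longrightarrow> dm h = A \<Longrightarrow> (Dop ^^ m) (lin A h) = lin (Pn X m A) (iq A m \<bullet> h)"
proof (rule ext)
  fix n assume h: "ar h" "dm h = A"
  have A: "A \<in> Ob" using h by auto
  have "iq A (n + m) \<bullet> h = (iq (Pn X m A) n \<bullet> iq A m) \<bullet> h" using iq_add[OF A, of m n] by simp
  also have "\<dots> = iq (Pn X m A) n \<bullet> (iq A m \<bullet> h)" using A h by simp
  finally show "(Dop ^^ m) (lin A h) n = lin (Pn X m A) (iq A m \<bullet> h) n" by (simp add: Dpow seq_post_def)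
qed

lemma Dseq_lin: assumes h: "addv h" "dm h = A" shows "is_Dseq X A (cd h) (lin A h)"
  unfolding Dseq_iff
proof (intro conjI allI)
  have ah: "ar h" using h by simp
  have A: "A \<in> Ob" using h by auto
  show "sq A (cd h) (lin A h)" using sq_lin[OF ah] h by simp
  fix n
  define C where "C = Pn X n A"
  define g where "g = iq A n \<bullet> h"
  have C: "C \<in> Ob" using A by (simp add: C_def)
  have g: "addv g" "ar g" "dm g = C" "cd g = cd h" "cd h \<in> Ob" using h A by (simp_all add: g_def C_def)
  have e1: "(Dop ^^ Suc n) (lin A h) = lin (pr C C) (q1 C C \<bullet> g)"
    using Dpow_lin[OF ah h(2), of "Suc n"] A h by (simp add: C_def g_def)
  have e2: "(Dop ^^ Suc (Suc n)) (lin A h) = lin (pr (pr C C) (pr C C)) (q1 (pr C C) (pr C C) \<bullet> (q1 C C \<bullet> g))"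
    using Dpow_lin[OF ah h(2), of "Suc (Suc n)"] A h by (simp add: C_def g_def)
  have c1: "seq_pre X (i10 C) (lin (pr C C) (q1 C C \<bullet> g)) = seq_zero X C (cd h)"
    using C g by (simp add: pre_lin lin_zero del: iq_pr iq_pr')
  have c2: "seq_pre X (cr (ii C) (sC C)) (lin (pr C C) (q1 C C \<bullet> g)) =
      seq_plus X (seq_pre X (cr (ii C) (q0 C C)) (lin (pr C C) (q1 C C \<bullet> g))) (seq_pre X (cr (ii C) (q1 C C)) (lin (pr C C) (q1 C C \<bullet> g)))"
    using C g by (simp add: pre_lin lin_plus del: iq_pr iq_pr')
  have c3: "seq_pre X (ell X C) (lin (pr (pr C C) (pr C C)) (q1 (pr C C) (pr C C) \<bullet> (q1 C C \<bullet> g))) = lin (pr C C) (q1 C C \<bullet> g)"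
    using C g by (simp add: pre_lin ell_eq del: iq_pr iq_pr')
  have c4: "seq_pre X (cmid X C) (lin (pr (pr C C) (pr C C)) (q1 (pr C C) (pr C C) \<bullet> (q1 C C \<bullet> g))) =
      lin (pr (pr C C) (pr C C)) (q1 (pr C C) (pr C C) \<bullet> (q1 C C \<bullet> g))"
    using C g by (simp add: pre_lin cmid_eq del: iq_pr iq_pr')
  show "conds (Pn X n A) (cd h) ((Dop ^^ Suc n) (lin A h)) ((Dop ^^ Suc (Suc n)) (lin A h))"
    unfolding e1 e2 conds_def C_def[symmetric] using c1 c2 c3 c4 by blast
qed

lemma Dseq_id: "A \<in> Ob \<Longrightarrow> is_Dseq X A A (iq A)"
  using Dseq_lin[of "ii A" A] by (simp add: lin_id)

lemma Dseq_zero: "A \<in> Ob \<Longrightarrow> B \<in> Ob \<Longrightarrow> is_Dseq X A B (seq_zero X A B)"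
  using Dseq_lin[of "Z A B" A] by (simp add: lin_zero)

lemma Dseq_p0: "A \<in> Ob \<Longrightarrow> B \<in> Ob \<Longrightarrow> is_Dseq X (pr A B) A (lin (pr A B) (q0 A B))"
  using Dseq_lin[of "q0 A B" "pr A B"] by simp
lemma Dseq_p1: "A \<in> Ob \<Longrightarrow> B \<in> Ob \<Longrightarrow> is_Dseq X (pr A B) B (lin (pr A B) (q1 A B))"
  using Dseq_lin[of "q1 A B" "pr A B"] by simp

lemma term_eq: "ar f \<Longrightarrow> ar g \<Longrightarrow> dm f = dm g \<Longrightarrow> cd f = c_term X \<Longrightarrow> cd g = c_term X \<Longrightarrow> f = g"
  using bang_uniq[of f "dm f"] bang_uniq[of g "dm g"] by (simp add: H_iff)

lemma addv_bang: "A \<in> Ob \<Longrightarrow> addv (c_bang X A)"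
proof -
  assume A: "A \<in> Ob"
  have b: "ar (c_bang X A)" "dm (c_bang X A) = A" "cd (c_bang X A) = c_term X"
    using bang_hom[OF A] by (auto simp: H_iff)
  show ?thesis unfolding addv_def
  proof (intro conjI allI impI ballI)
    show "ar (c_bang X A)" by (rule b(1))
    fix f g assume "ar f" "ar g" "dm f = dm g" "cd f = dm (c_bang X A)" "cd g = dm (c_bang X A)"
    then show "(f \<oplus> g) \<bullet> c_bang X A = f \<bullet> c_bang X A \<oplus> g \<bullet> c_bang X A"
      by (intro term_eq) (use b term_obj in simp_all)
  next
    fix D assume "D \<in> Ob"
    then show "Z D (dm (c_bang X A)) \<bullet> c_bang X A = Z D (cd (c_bang X A))"
      by (intro term_eq) (use b A term_obj in simp_all)
  qed
qed

lemma Dseq_bang: assumes A: "A \<in> Ob" shows "is_Dseq X A (c_term X) (\<lambda>n. c_bang X (Pn X n A))"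
proof -
  have b: "ar (c_bang X A)" "dm (c_bang X A) = A" "cd (c_bang X A) = c_term X"
    using bang_hom[OF A] by (auto simp: H_iff)
  have e: "lin A (c_bang X A) = (\<lambda>n. c_bang X (Pn X n A))"
  proof
    fix n
    have "ar (c_bang X (Pn X n A))" "dm (c_bang X (Pn X n A)) = Pn X n A" "cd (c_bang X (Pn X n A)) = c_term X"
      using bang_hom[of "Pn X n A"] A by (auto simp: H_iff)
    then show "lin A (c_bang X A) n = c_bang X (Pn X n A)"
      unfolding seq_post_def by (intro term_eq) (use A b term_obj in simp_all)
  qed
  show ?thesis using Dseq_lin[OF addv_bang[OF A]] b e by simp
qed

lemma Dseq_plus: assumes f: "is_Dseq X A B f" and g: "is_Dseq X A B g" shows "is_Dseq X A B (seq_plus X f g)"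
  unfolding Dseq_iff
proof (intro conjI allI)
  have sf: "sq A B f" and sg: "sq A B g" using Dseq_sq f g by auto
  show "sq A B (seq_plus X f g)" by (rule sq_plus[OF sf sg])
  fix n
  define C where "C = Pn X n A"
  have C: "C \<in> Ob" using sqs[OF sf] by (simp add: C_def)
  have Dp: "(Dop ^^ m) (seq_plus X f g) = seq_plus X ((Dop ^^ m) f) ((Dop ^^ m) g)" for m
    by (rule ext) (simp add: Dpow seq_plus_def)
  have pp: "seq_pre X h (seq_plus X u v) = seq_plus X (seq_pre X h u) (seq_pre X h v)"
    if "ar h" "cd h = D" "sq D B u" "sq D B v" for h D u v
    by (rule ext) (use that in \<open>simp add: seq_pre_def seq_plus_def sqs\<close>)
  note cf = Dseq_cond[OF f, of n, unfolded conds_def C_def[symmetric]]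
  note cg = Dseq_cond[OF g, of n, unfolded conds_def C_def[symmetric]]
  have s1f: "sq (pr C C) B ((Dop ^^ Suc n) f)" using sq_Dpow[OF sf, of "Suc n"] by (simp add: C_def)
  have s1g: "sq (pr C C) B ((Dop ^^ Suc n) g)" using sq_Dpow[OF sg, of "Suc n"] by (simp add: C_def)
  have s2f: "sq (pr (pr C C) (pr C C)) B ((Dop ^^ Suc (Suc n)) f)" using sq_Dpow[OF sf, of "Suc (Suc n)"] by (simp add: C_def)
  have s2g: "sq (pr (pr C C) (pr C C)) B ((Dop ^^ Suc (Suc n)) g)" using sq_Dpow[OF sg, of "Suc (Suc n)"] by (simp add: C_def)
  have c1: "seq_pre X (i10 C) (seq_plus X ((Dop ^^ Suc n) f) ((Dop ^^ Suc n) g)) = seq_zero X C B"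
    using pp[OF _ _ s1f s1g, of "i10 C"] cf cg C sqs[OF sf] by (simp add: seq_plus_def seq_zero_def)
  have c2: "seq_pre X (cr (ii C) (sC C)) (seq_plus X ((Dop ^^ Suc n) f) ((Dop ^^ Suc n) g)) =
     seq_plus X (seq_pre X (cr (ii C) (q0 C C)) (seq_plus X ((Dop ^^ Suc n) f) ((Dop ^^ Suc n) g)))
                (seq_pre X (cr (ii C) (q1 C C)) (seq_plus X ((Dop ^^ Suc n) f) ((Dop ^^ Suc n) g)))"
  proof
    fix k
    let ?a = "seq_pre X (cr (ii C) (q0 C C)) ((Dop ^^ Suc n) f) k"
    let ?b = "seq_pre X (cr (ii C) (q1 C C)) ((Dop ^^ Suc n) f) k"
    let ?c = "seq_pre X (cr (ii C) (q0 C C)) ((Dop ^^ Suc n) g) k"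
    let ?d = "seq_pre X (cr (ii C) (q1 C C)) ((Dop ^^ Suc n) g) k"
    have t: "ar ?a" "ar ?b" "ar ?c" "ar ?d" "dm ?b = dm ?a" "dm ?c = dm ?a" "dm ?d = dm ?a"
         "cd ?a = B" "cd ?b = B" "cd ?c = B" "cd ?d = B"
      using C sqs[OF s1f] sqs[OF s1g] by (simp_all add: seq_pre_def)
    have ff: "seq_pre X (cr (ii C) (sC C)) ((Dop ^^ Suc n) f) k = ?a \<oplus> ?b"
      using cf by (simp add: seq_plus_def)
    have gg: "seq_pre X (cr (ii C) (sC C)) ((Dop ^^ Suc n) g) k = ?c \<oplus> ?d"
      using cg by (simp add: seq_plus_def)
    have "seq_pre X (cr (ii C) (sC C)) (seq_plus X ((Dop ^^ Suc n) f) ((Dop ^^ Suc n) g)) k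
        = seq_pre X (cr (ii C) (sC C)) ((Dop ^^ Suc n) f) k \<oplus> seq_pre X (cr (ii C) (sC C)) ((Dop ^^ Suc n) g) k"
      using pp[OF _ _ s1f s1g, of "cr (ii C) (sC C)"] C by (simp add: seq_plus_def)
    also have "\<dots> = (?a \<oplus> ?b) \<oplus> (?c \<oplus> ?d)" by (simp only: ff gg)
    also have "\<dots> = (?a \<oplus> ?c) \<oplus> (?b \<oplus> ?d)" using t by (intro plus_swap) (auto simp: H_iff)
    also have "\<dots> = seq_plus X (seq_pre X (cr (ii C) (q0 C C)) (seq_plus X ((Dop ^^ Suc n) f) ((Dop ^^ Suc n) g)))
                (seq_pre X (cr (ii C) (q1 C C)) (seq_plus X ((Dop ^^ Suc n) f) ((Dop ^^ Suc n) g))) k"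
      using pp[OF _ _ s1f s1g, of "cr (ii C) (q0 C C)"] pp[OF _ _ s1f s1g, of "cr (ii C) (q1 C C)"] C
      by (simp add: seq_plus_def)
    finally show "seq_pre X (cr (ii C) (sC C)) (seq_plus X ((Dop ^^ Suc n) f) ((Dop ^^ Suc n) g)) k =
      seq_plus X (seq_pre X (cr (ii C) (q0 C C)) (seq_plus X ((Dop ^^ Suc n) f) ((Dop ^^ Suc n) g)))
                (seq_pre X (cr (ii C) (q1 C C)) (seq_plus X ((Dop ^^ Suc n) f) ((Dop ^^ Suc n) g))) k" .
  qed
  have c3: "seq_pre X (ell X C) (seq_plus X ((Dop ^^ Suc (Suc n)) f) ((Dop ^^ Suc (Suc n)) g)) = seq_plus X ((Dop ^^ Suc n) f) ((Dop ^^ Suc n) g)"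
    using pp[OF _ _ s2f s2g, of "ell X C"] cf cg C by simp
  have c4: "seq_pre X (cmid X C) (seq_plus X ((Dop ^^ Suc (Suc n)) f) ((Dop ^^ Suc (Suc n)) g)) = seq_plus X ((Dop ^^ Suc (Suc n)) f) ((Dop ^^ Suc (Suc n)) g)"
    using pp[OF _ _ s2f s2g, of "cmid X C"] cf cg C by simp
  show "conds (Pn X n A) B ((Dop ^^ Suc n) (seq_plus X f g)) ((Dop ^^ Suc (Suc n)) (seq_plus X f g))"
    unfolding Dp conds_def C_def[symmetric] using c1 c2 c3 c4 by blast
qed

lemma Dseq_pair: assumes f: "is_Dseq X D A f" and g: "is_Dseq X D B g"
  shows "is_Dseq X D (pr A B) (\<lambda>n. pa (f n) (g n))"
  unfolding Dseq_iff
proof (intro conjI allI)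
  have sf: "sq D A f" and sg: "sq D B g" using Dseq_sq f g by auto
  show "sq D (pr A B) (\<lambda>n. pa (f n) (g n))" by (rule sqI) (use sqs[OF sf] sqs[OF sg] in simp_all)
  fix n
  define C where "C = Pn X n D"
  have C: "C \<in> Ob" using sqs[OF sf] by (simp add: C_def)
  have AB: "A \<in> Ob" "B \<in> Ob" using sqs[OF sf] sqs[OF sg] by auto
  have Dp: "(Dop ^^ m) (\<lambda>n. pa (f n) (g n)) = (\<lambda>k. pa ((Dop ^^ m) f k) ((Dop ^^ m) g k))" for m
    by (rule ext) (simp add: Dpow)
  have pp: "seq_pre X h (\<lambda>k. pa (u k) (v k)) = (\<lambda>k. pa (seq_pre X h u k) (seq_pre X h v k))"
    if "ar h" "cd h = E" "sq E A u" "sq E B v" for h E u v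
    by (rule ext) (use that in \<open>simp add: seq_pre_def sqs\<close>)
  note cf = Dseq_cond[OF f, of n, unfolded conds_def C_def[symmetric]]
  note cg = Dseq_cond[OF g, of n, unfolded conds_def C_def[symmetric]]
  have s1f: "sq (pr C C) A ((Dop ^^ Suc n) f)" using sq_Dpow[OF sf, of "Suc n"] by (simp add: C_def)
  have s1g: "sq (pr C C) B ((Dop ^^ Suc n) g)" using sq_Dpow[OF sg, of "Suc n"] by (simp add: C_def)
  have s2f: "sq (pr (pr C C) (pr C C)) A ((Dop ^^ Suc (Suc n)) f)" using sq_Dpow[OF sf, of "Suc (Suc n)"] by (simp add: C_def)
  have s2g: "sq (pr (pr C C) (pr C C)) B ((Dop ^^ Suc (Suc n)) g)" using sq_Dpow[OF sg, of "Suc (Suc n)"] by (simp add: C_def)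
  have c1: "seq_pre X (i10 C) (\<lambda>k. pa ((Dop ^^ Suc n) f k) ((Dop ^^ Suc n) g k)) = seq_zero X C (pr A B)"
    using pp[OF _ _ s1f s1g, of "i10 C"] cf cg C AB by (simp add: seq_zero_def pzero2)
  have c2: "seq_pre X (cr (ii C) (sC C)) (\<lambda>k. pa ((Dop ^^ Suc n) f k) ((Dop ^^ Suc n) g k)) =
     seq_plus X (seq_pre X (cr (ii C) (q0 C C)) (\<lambda>k. pa ((Dop ^^ Suc n) f k) ((Dop ^^ Suc n) g k)))
                (seq_pre X (cr (ii C) (q1 C C)) (\<lambda>k. pa ((Dop ^^ Suc n) f k) ((Dop ^^ Suc n) g k)))"
  proof
    fix k
    have ff: "seq_pre X (cr (ii C) (sC C)) ((Dop ^^ Suc n) f) k = seq_pre X (cr (ii C) (q0 C C)) ((Dop ^^ Suc n) f) k \<oplus> seq_pre X (cr (ii C) (q1 C C)) ((Dop ^^ Suc n) f) k"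
      using cf by (simp add: seq_plus_def)
    have gg: "seq_pre X (cr (ii C) (sC C)) ((Dop ^^ Suc n) g) k = seq_pre X (cr (ii C) (q0 C C)) ((Dop ^^ Suc n) g) k \<oplus> seq_pre X (cr (ii C) (q1 C C)) ((Dop ^^ Suc n) g) k"
      using cg by (simp add: seq_plus_def)
    show "seq_pre X (cr (ii C) (sC C)) (\<lambda>k. pa ((Dop ^^ Suc n) f k) ((Dop ^^ Suc n) g k)) k =
     seq_plus X (seq_pre X (cr (ii C) (q0 C C)) (\<lambda>k. pa ((Dop ^^ Suc n) f k) ((Dop ^^ Suc n) g k)))
                (seq_pre X (cr (ii C) (q1 C C)) (\<lambda>k. pa ((Dop ^^ Suc n) f k) ((Dop ^^ Suc n) g k))) k"
      using pp[OF _ _ s1f s1g, of "cr (ii C) (sC C)"] pp[OF _ _ s1f s1g, of "cr (ii C) (q0 C C)"]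
            pp[OF _ _ s1f s1g, of "cr (ii C) (q1 C C)"] C ff gg sqs[OF s1f] sqs[OF s1g]
      by (simp add: seq_plus_def pplus) (simp add: seq_pre_def pplus)
  qed
  have c3: "seq_pre X (ell X C) (\<lambda>k. pa ((Dop ^^ Suc (Suc n)) f k) ((Dop ^^ Suc (Suc n)) g k)) = (\<lambda>k. pa ((Dop ^^ Suc n) f k) ((Dop ^^ Suc n) g k))"
    using pp[OF _ _ s2f s2g, of "ell X C"] cf cg C by simp
  have c4: "seq_pre X (cmid X C) (\<lambda>k. pa ((Dop ^^ Suc (Suc n)) f k) ((Dop ^^ Suc (Suc n)) g k)) = (\<lambda>k. pa ((Dop ^^ Suc (Suc n)) f k) ((Dop ^^ Suc (Suc n)) g k))"
    using pp[OF _ _ s2f s2g, of "cmid X C"] cf cg C by simp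
  show "conds (Pn X n D) (pr A B) ((Dop ^^ Suc n) (\<lambda>n. pa (f n) (g n))) ((Dop ^^ Suc (Suc n)) (\<lambda>n. pa (f n) (g n)))"
    unfolding Dp conds_def C_def[symmetric] using c1 c2 c3 c4 by blast
qed

end
context cla begin

abbreviation Y where "Y \<equiv> Dseq_cat X"

lemma Ysel[simp]:
  "c_obj Y = Ob" "c_arr Y = {f. \<exists>A B. is_Dseq X A B f}" "c_dom Y = (\<lambda>f. dm (f 0))" "c_cod Y = (\<lambda>f. cd (f 0))"
  "c_id Y = iq" "c_comp Y = sc" "c_plus Y = seq_plus X" "c_zero Y = seq_zero X" "c_prod Y = pr"
  "c_p0 Y = (\<lambda>A B. lin (pr A B) (q0 A B))" "c_p1 Y = (\<lambda>A B. lin (pr A B) (q1 A B))"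
  "c_pair Y = (\<lambda>f g n. pa (f n) (g n))" "c_term Y = c_term X" "c_bang Y = (\<lambda>A n. c_bang X (Pn X n A))"
  by (simp_all add: Dseq_cat_def)

lemma Dseq_dm: assumes "is_Dseq X A B f" shows "dm (f 0) = A"
  using sqs(1-3)[OF Dseq_sq[OF assms], of 0] by simp
lemma Dseq_cd: assumes "is_Dseq X A B f" shows "cd (f 0) = B"
  using sqs(1-3)[OF Dseq_sq[OF assms], of 0] by simp
lemma Dseq_ob: assumes "is_Dseq X A B f" shows "A \<in> Ob" "B \<in> Ob"
  using sqs(4,5)[OF Dseq_sq[OF assms]] by simp_all

lemma homY: "hom Y A B = {f. is_Dseq X A B f}"
  unfolding hom_def using Dseq_dm Dseq_cd by auto

lemma catY: "is_category Y"
  unfolding is_category_def homY mem_Collect_eq Ysel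
proof (intro conjI allI impI ballI)
  fix f assume "f \<in> {f. \<exists>A B. is_Dseq X A B f}"
  then obtain A B where f: "is_Dseq X A B f" by blast
  show "dm (f 0) \<in> Ob" using Dseq_dm[OF f] Dseq_ob[OF f] by simp
  show "cd (f 0) \<in> Ob" using Dseq_cd[OF f] Dseq_ob[OF f] by simp
next
  fix A assume "A \<in> Ob" then show "is_Dseq X A A (iq A)" by (rule Dseq_id)
next
  fix A B D f g assume "is_Dseq X A B f" "is_Dseq X B D g" then show "is_Dseq X A D (sc f g)" by (rule Dseq_sc)
next
  fix A B f assume f: "is_Dseq X A B f"
  show "sc (iq A) f = f" by (rule sc_id_left[OF Dseq_sq[OF f]])
  show "sc f (iq B) = f" by (rule sc_id_right[OF Dseq_sq[OF f]])
next
  fix A B D E f g h assume "is_Dseq X A B f" "is_Dseq X B D g" "is_Dseq X D E h"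
  then show "sc (sc f g) h = sc f (sc g h)" using sc_assoc Dseq_sq by blast
qed

lemma laY: "is_left_additive Y"
  unfolding is_left_additive_def homY mem_Collect_eq Ysel
proof (intro conjI allI impI ballI catY)
  fix A B assume "A \<in> Ob" "B \<in> Ob" then show "is_Dseq X A B (seq_zero X A B)" by (rule Dseq_zero)
next
  fix A B f g assume "is_Dseq X A B f" "is_Dseq X A B g" then show "is_Dseq X A B (seq_plus X f g)" by (rule Dseq_plus)
next
  fix A B f g h assume a: "is_Dseq X A B f" "is_Dseq X A B g" "is_Dseq X A B h"
  show "seq_plus X (seq_plus X f g) h = seq_plus X f (seq_plus X g h)"
  proof
    fix n show "seq_plus X (seq_plus X f g) h n = seq_plus X f (seq_plus X g h) n"
      using sqs[OF Dseq_sq[OF a(1)]] sqs[OF Dseq_sq[OF a(2)]] sqs[OF Dseq_sq[OF a(3)]]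
      by (simp add: seq_plus_def plus_assoc H_iff)
  qed
next
  fix A B f g assume a: "is_Dseq X A B f" "is_Dseq X A B g"
  show "seq_plus X f g = seq_plus X g f"
  proof
    fix n show "seq_plus X f g n = seq_plus X g f n"
      using sqs[OF Dseq_sq[OF a(1)]] sqs[OF Dseq_sq[OF a(2)]]
      by (simp add: seq_plus_def) (rule plus_comm, simp_all add: H_iff)
  qed
next
  fix A B f assume a: "is_Dseq X A B f"
  show "seq_plus X f (seq_zero X A B) = f"
  proof
    fix n show "seq_plus X f (seq_zero X A B) n = f n"
      using sqs[OF Dseq_sq[OF a(1)]] by (simp add: seq_plus_def seq_zero_def)
  qed
next
  fix A B D f g h assume a: "is_Dseq X A B f" "is_Dseq X B D g" "is_Dseq X B D h"
  show "sc f (seq_plus X g h) = seq_plus X (sc f g) (sc f h)"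
    by (rule sc_plus_right) (use a Dseq_sq in auto)
next
  fix A B D f assume a: "is_Dseq X A B f" "D \<in> Ob"
  show "sc f (seq_zero X B D) = seq_zero X A D" by (rule sc_zero_right[OF Dseq_sq[OF a(1)] a(2)])
qed

lemma claY: "is_cartesian_left_additive Y"
  unfolding is_cartesian_left_additive_def
proof (intro conjI laY)
  show "c_term Y \<in> c_obj Y" using term_obj by simp
  show "\<forall>A\<in>c_obj Y. c_bang Y A \<in> hom Y A (c_term Y) \<and> (\<forall>h\<in>hom Y A (c_term Y). h = c_bang Y A)"
    unfolding homY mem_Collect_eq Ysel
  proof (intro ballI conjI)
    fix A assume A: "A \<in> Ob"
    show "is_Dseq X A (c_term X) (\<lambda>n. c_bang X (Pn X n A))" by (rule Dseq_bang[OF A])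
    fix h assume "h \<in> {f. is_Dseq X A (c_term X) f}"
    then have h: "is_Dseq X A (c_term X) h" by simp
    show "h = (\<lambda>n. c_bang X (Pn X n A))"
    proof
      fix n show "h n = c_bang X (Pn X n A)"
        using sqs(1-3)[OF Dseq_sq[OF h], of n] by (intro bang_uniq) (simp add: H_iff)
    qed
  qed
  show "\<forall>A\<in>c_obj Y. \<forall>B\<in>c_obj Y. c_prod Y A B \<in> c_obj Y \<and> c_p0 Y A B \<in> hom Y (c_prod Y A B) A \<and>
      c_p1 Y A B \<in> hom Y (c_prod Y A B) B \<and> is_additive Y (c_p0 Y A B) \<and> is_additive Y (c_p1 Y A B)"
    unfolding Ysel homY mem_Collect_eq
  proof (intro ballI conjI)
    fix A B assume A: "A \<in> Ob" and B: "B \<in> Ob"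
    show "pr A B \<in> Ob" using A B by simp
    show "is_Dseq X (pr A B) A (lin (pr A B) (q0 A B))" by (rule Dseq_p0[OF A B])
    show "is_Dseq X (pr A B) B (lin (pr A B) (q1 A B))" by (rule Dseq_p1[OF A B])
    show "is_additive Y (lin (pr A B) (q0 A B))"
      unfolding is_additive_def homY mem_Collect_eq Ysel
    proof (intro conjI allI impI ballI)
      fix A' f g assume f: "is_Dseq X A' (dm (lin (pr A B) (q0 A B) 0)) f" and g: "is_Dseq X A' (dm (lin (pr A B) (q0 A B) 0)) g"
      have e: "dm (lin (pr A B) (q0 A B) 0) = pr A B" using A B by (simp add: seq_post_def)
      have sf: "sq A' (pr A B) f" and sg: "sq A' (pr A B) g" using f g e Dseq_sq by auto
      show "sc (seq_plus X f g) (lin (pr A B) (q0 A B)) = seq_plus X (sc f (lin (pr A B) (q0 A B))) (sc g (lin (pr A B) (q0 A B)))"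
        using sc_lin_right[OF sq_plus[OF sf sg], of "q0 A B"] sc_lin_right[OF sf, of "q0 A B"] sc_lin_right[OF sg, of "q0 A B"] A B
        by (simp add: seq_post_def seq_plus_def sqs[OF sf] sqs[OF sg] fun_eq_iff)
    next
      fix A' assume A': "A' \<in> Ob"
      have e: "dm (lin (pr A B) (q0 A B) 0) = pr A B" "cd (lin (pr A B) (q0 A B) 0) = A" using A B by (simp_all add: seq_post_def)
      show "sc (seq_zero X A' (dm (lin (pr A B) (q0 A B) 0))) (lin (pr A B) (q0 A B)) = seq_zero X A' (cd (lin (pr A B) (q0 A B) 0))"
        unfolding e using sc_lin_right[OF sq_zero[OF A', of "pr A B"], of "q0 A B"] A B A'
        by (simp add: seq_post_def seq_zero_def fun_eq_iff)
    qed
    show "is_additive Y (lin (pr A B) (q1 A B))"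
      unfolding is_additive_def homY mem_Collect_eq Ysel
    proof (intro conjI allI impI ballI)
      fix A' f g assume f: "is_Dseq X A' (dm (lin (pr A B) (q1 A B) 0)) f" and g: "is_Dseq X A' (dm (lin (pr A B) (q1 A B) 0)) g"
      have e: "dm (lin (pr A B) (q1 A B) 0) = pr A B" using A B by (simp add: seq_post_def)
      have sf: "sq A' (pr A B) f" and sg: "sq A' (pr A B) g" using f g e Dseq_sq by auto
      show "sc (seq_plus X f g) (lin (pr A B) (q1 A B)) = seq_plus X (sc f (lin (pr A B) (q1 A B))) (sc g (lin (pr A B) (q1 A B)))"
        using sc_lin_right[OF sq_plus[OF sf sg], of "q1 A B"] sc_lin_right[OF sf, of "q1 A B"] sc_lin_right[OF sg, of "q1 A B"] A B
        by (simp add: seq_post_def seq_plus_def sqs[OF sf] sqs[OF sg] fun_eq_iff)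
    next
      fix A' assume A': "A' \<in> Ob"
      have e: "dm (lin (pr A B) (q1 A B) 0) = pr A B" "cd (lin (pr A B) (q1 A B) 0) = B" using A B by (simp_all add: seq_post_def)
      show "sc (seq_zero X A' (dm (lin (pr A B) (q1 A B) 0))) (lin (pr A B) (q1 A B)) = seq_zero X A' (cd (lin (pr A B) (q1 A B) 0))"
        unfolding e using sc_lin_right[OF sq_zero[OF A', of "pr A B"], of "q1 A B"] A B A'
        by (simp add: seq_post_def seq_zero_def fun_eq_iff)
    qed
  qed
  show "\<forall>A B D f g. A \<in> c_obj Y \<longrightarrow> B \<in> c_obj Y \<longrightarrow> f \<in> hom Y D A \<longrightarrow> g \<in> hom Y D B \<longrightarrow>
     c_pair Y f g \<in> hom Y D (c_prod Y A B) \<and> c_comp Y (c_pair Y f g) (c_p0 Y A B) = f \<and> c_comp Y (c_pair Y f g) (c_p1 Y A B) = g"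
    unfolding Ysel homY mem_Collect_eq
  proof (intro allI impI conjI)
    fix A B D f g assume A: "A \<in> Ob" and B: "B \<in> Ob" and f: "is_Dseq X D A f" and g: "is_Dseq X D B g"
    show "is_Dseq X D (pr A B) (\<lambda>n. pa (f n) (g n))" by (rule Dseq_pair[OF f g])
    have sp: "sq D (pr A B) (\<lambda>n. pa (f n) (g n))" by (rule Dseq_sq[OF Dseq_pair[OF f g]])
    show "sc (\<lambda>n. pa (f n) (g n)) (lin (pr A B) (q0 A B)) = f"
      using sc_lin_right[OF sp, of "q0 A B"] A B sqs[OF Dseq_sq[OF f]] sqs[OF Dseq_sq[OF g]]
      by (simp add: seq_post_def fun_eq_iff)
    show "sc (\<lambda>n. pa (f n) (g n)) (lin (pr A B) (q1 A B)) = g"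
      using sc_lin_right[OF sp, of "q1 A B"] A B sqs[OF Dseq_sq[OF f]] sqs[OF Dseq_sq[OF g]]
      by (simp add: seq_post_def fun_eq_iff)
  qed
  show "\<forall>A B D h. A \<in> c_obj Y \<longrightarrow> B \<in> c_obj Y \<longrightarrow> h \<in> hom Y D (c_prod Y A B) \<longrightarrow>
     c_pair Y (c_comp Y h (c_p0 Y A B)) (c_comp Y h (c_p1 Y A B)) = h"
    unfolding Ysel homY mem_Collect_eq
  proof (intro allI impI)
    fix A B D h assume A: "A \<in> Ob" and B: "B \<in> Ob" and h: "is_Dseq X D (pr A B) h"
    have sh: "sq D (pr A B) h" by (rule Dseq_sq[OF h])
    show "(\<lambda>n. pa (sc h (lin (pr A B) (q0 A B)) n) (sc h (lin (pr A B) (q1 A B)) n)) = h"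
      using sc_lin_right[OF sh, of "q0 A B"] sc_lin_right[OF sh, of "q1 A B"] A B sqs[OF sh]
      by (simp add: seq_post_def fun_eq_iff peta)
  qed
qed

end
context cla begin

lemma scll: "ar h \<Longrightarrow> dm h = D \<Longrightarrow> ar u \<Longrightarrow> cd h = E \<Longrightarrow> dm u = E \<Longrightarrow> sc (lin D h) (lin E u) = lin D (h \<bullet> u)"
  using sc_lin_left[of h D "lin E u"] pre_lin[of h E u] by simp

lemma crossY: assumes u: "ar u" "dm u = A" and v: "ar v" "dm v = B"
  shows "cross Y (lin A u) (lin B v) = lin (pr A B) (cr u v)"
proof -
  have A: "A \<in> Ob" "B \<in> Ob" using u v by auto
  have d: "c_dom Y (lin A u) = A" "c_dom Y (lin B v) = B" using u v A by (simp_all add: seq_post_def)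
  have "cross Y (lin A u) (lin B v) = (\<lambda>n. pa (sc (lin (pr A B) (q0 A B)) (lin A u) n) (sc (lin (pr A B) (q1 A B)) (lin B v) n))"
    unfolding cross_def d by simp
  also have "\<dots> = (\<lambda>n. pa (lin (pr A B) (q0 A B \<bullet> u) n) (lin (pr A B) (q1 A B \<bullet> v) n))"
    using A u v by (simp add: scll)
  also have "\<dots> = lin (pr A B) (pa (q0 A B \<bullet> u) (q1 A B \<bullet> v))"
    by (rule lin_pair) (use A u v in simp_all)
  also have "\<dots> = lin (pr A B) (cr u v)" using u v by (simp add: cross_def)
  finally show ?thesis .
qed

lemma P10: "A \<in> Ob \<Longrightarrow> (\<lambda>n. pa (iq A n) (seq_zero X A A n)) = lin A (i10 A)"
  using lin_pair[of "ii A" "Z A A" A] by (simp add: lin_id lin_zero)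
lemma P01: "A \<in> Ob \<Longrightarrow> (\<lambda>n. pa (seq_zero X A A n) (iq A n)) = lin A (i01 A)"
  using lin_pair[of "Z A A" "ii A" A] by (simp add: lin_id lin_zero)

lemma ellY: assumes A: "A \<in> Ob" shows "ell Y A = lin (pr A A) (ell X A)"
proof -
  have "ell Y A = cross Y (\<lambda>n. pa (iq A n) (seq_zero X A A n)) (\<lambda>n. pa (seq_zero X A A n) (iq A n))"
    by (simp add: ell_def)
  also have "\<dots> = cross Y (lin A (i10 A)) (lin A (i01 A))" using A by (simp only: P10 P01)
  also have "\<dots> = lin (pr A A) (ell X A)" using A by (simp add: crossY ell_eq)
  finally show ?thesis .
qed

lemma cmidY: assumes A: "A \<in> Ob" shows "cmid Y A = lin (pr (pr A A) (pr A A)) (cmid X A)"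
proof -
  let ?P = "pr (pr A A) (pr A A)"
  have "cmid Y A = (\<lambda>n. pa (pa (sc (lin ?P (q0 (pr A A) (pr A A))) (lin (pr A A) (q0 A A)) n)
                                (sc (lin ?P (q1 (pr A A) (pr A A))) (lin (pr A A) (q0 A A)) n))
                            (pa (sc (lin ?P (q0 (pr A A) (pr A A))) (lin (pr A A) (q1 A A)) n)
                                (sc (lin ?P (q1 (pr A A) (pr A A))) (lin (pr A A) (q1 A A)) n)))"
    by (simp add: cmid_def Let_def)
  also have "\<dots> = (\<lambda>n. pa (pa (lin ?P (q0 (pr A A) (pr A A) \<bullet> q0 A A) n) (lin ?P (q1 (pr A A) (pr A A) \<bullet> q0 A A) n))
                            (pa (lin ?P (q0 (pr A A) (pr A A) \<bullet> q1 A A) n) (lin ?P (q1 (pr A A) (pr A A) \<bullet> q1 A A) n)))"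
    using A by (simp add: scll)
  also have "\<dots> = (\<lambda>n. pa (lin ?P (pa (q0 (pr A A) (pr A A) \<bullet> q0 A A) (q1 (pr A A) (pr A A) \<bullet> q0 A A)) n)
                            (lin ?P (pa (q0 (pr A A) (pr A A) \<bullet> q1 A A) (q1 (pr A A) (pr A A) \<bullet> q1 A A)) n))"
    using A lin_pair[of "q0 (pr A A) (pr A A) \<bullet> q0 A A" "q1 (pr A A) (pr A A) \<bullet> q0 A A" ?P]
      lin_pair[of "q0 (pr A A) (pr A A) \<bullet> q1 A A" "q1 (pr A A) (pr A A) \<bullet> q1 A A" ?P]
    by (simp add: fun_eq_iff)
  also have "\<dots> = lin ?P (cmid X A)"
    using A lin_pair[of "pa (q0 (pr A A) (pr A A) \<bullet> q0 A A) (q1 (pr A A) (pr A A) \<bullet> q0 A A)"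
                       "pa (q0 (pr A A) (pr A A) \<bullet> q1 A A) (q1 (pr A A) (pr A A) \<bullet> q1 A A)" ?P]
    by (simp add: cmid_eq)
  finally show ?thesis .
qed

lemma Tpair: assumes f: "sq A B f" shows "(\<lambda>n. pa (sc (lin (pr A A) (q0 A A)) f n) (Dop f n)) = T f"
proof -
  have A: "A \<in> Ob" using sqs(4)[OF f] .
  have "sc (lin (pr A A) (q0 A A)) f = seq_pre X (q0 A A) f" using A by (simp add: sc_lin_left)
  then show ?thesis by (simp add: fun_eq_iff seq_pre_def Dop_def T_eq[OF f])
qed

lemma cdY: "is_cartesian_differential Y Dop"
  unfolding is_cartesian_differential_def
proof (intro conjI claY)
  show "\<forall>A B f. f \<in> hom Y A B \<longrightarrow> Dop f \<in> hom Y (c_prod Y A A) B"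
    unfolding homY Ysel using Dseq_D by auto
  show "\<forall>A B f g. f \<in> hom Y A B \<longrightarrow> g \<in> hom Y A B \<longrightarrow> Dop (c_plus Y f g) = c_plus Y (Dop f) (Dop g)"
    by (simp add: Dop_def seq_plus_def)
  show "\<forall>A\<in>c_obj Y. \<forall>B\<in>c_obj Y. Dop (c_zero Y A B) = c_zero Y (c_prod Y A A) B"
    by (simp add: Dop_def seq_zero_def fun_eq_iff)
  show "\<forall>A B f. f \<in> hom Y A B \<longrightarrow>
     c_comp Y (cross Y (c_id Y A) (c_plus Y (c_p0 Y A A) (c_p1 Y A A))) (Dop f) =
     c_plus Y (c_comp Y (cross Y (c_id Y A) (c_p0 Y A A)) (Dop f)) (c_comp Y (cross Y (c_id Y A) (c_p1 Y A A)) (Dop f))"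
    unfolding homY Ysel mem_Collect_eq
  proof (intro allI impI)
    fix A B f assume f: "is_Dseq X A B f"
    have A: "A \<in> Ob" using Dseq_ob[OF f] by simp
    have e: "cross Y (iq A) (seq_plus X (lin (pr A A) (q0 A A)) (lin (pr A A) (q1 A A))) = lin (pr A (pr A A)) (cr (ii A) (sC A))"
    proof -
      have "cross Y (iq A) (seq_plus X (lin (pr A A) (q0 A A)) (lin (pr A A) (q1 A A))) = cross Y (lin A (ii A)) (lin (pr A A) (sC A))"
        using A by (simp add: lin_id lin_plus)
      also have "\<dots> = lin (pr A (pr A A)) (cr (ii A) (sC A))" using A by (simp add: crossY)
      finally show ?thesis .
    qed
    have ej: "cross Y (iq A) (lin (pr A A) (qq A A)) = lin (pr A (pr A A)) (cr (ii A) (qq A A))" if "qq = q0 \<or> qq = q1" for qq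
    proof -
      have a: "ar (qq A A)" "dm (qq A A) = pr A A" using that A by auto
      have "cross Y (iq A) (lin (pr A A) (qq A A)) = cross Y (lin A (ii A)) (lin (pr A A) (qq A A))"
        using A by (simp add: lin_id)
      also have "\<dots> = lin (pr A (pr A A)) (cr (ii A) (qq A A))" using A a by (simp add: crossY)
      finally show ?thesis .
    qed
    note c = cond0[OF f, unfolded conds_def]
    show "sc (cross Y (iq A) (seq_plus X (lin (pr A A) (q0 A A)) (lin (pr A A) (q1 A A)))) (Dop f) =
      seq_plus X (sc (cross Y (iq A) (lin (pr A A) (q0 A A))) (Dop f)) (sc (cross Y (iq A) (lin (pr A A) (q1 A A))) (Dop f))"
      unfolding e ej[of q0, simplified] ej[of q1, simplified] using A c by (simp add: sc_lin_left)
  qed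
  show "\<forall>A B f. f \<in> hom Y A B \<longrightarrow> c_comp Y (c_pair Y (c_id Y A) (c_zero Y A A)) (Dop f) = c_zero Y A B"
    unfolding homY Ysel mem_Collect_eq
  proof (intro allI impI)
    fix A B f assume f: "is_Dseq X A B f"
    have A: "A \<in> Ob" using Dseq_ob[OF f] by simp
    note c = cond0[OF f, unfolded conds_def]
    show "sc (\<lambda>n. pa (iq A n) (seq_zero X A A n)) (Dop f) = seq_zero X A B"
      using A c by (simp add: P10 sc_lin_left)
  qed
  show "\<forall>A\<in>c_obj Y. Dop (c_id Y A) = c_p1 Y A A"
    by (simp add: Dop_def seq_post_def fun_eq_iff)
  show "\<forall>A\<in>c_obj Y. \<forall>B\<in>c_obj Y.
     Dop (c_p0 Y A B) = c_comp Y (c_p1 Y (c_prod Y A B) (c_prod Y A B)) (c_p0 Y A B) \<and>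
     Dop (c_p1 Y A B) = c_comp Y (c_p1 Y (c_prod Y A B) (c_prod Y A B)) (c_p1 Y A B)"
  proof (intro ballI conjI)
    fix A B assume "A \<in> c_obj Y" "B \<in> c_obj Y"
    then have A: "A \<in> Ob" "B \<in> Ob" by simp_all
    have e: "sc (lin (pr (pr A B) (pr A B)) (q1 (pr A B) (pr A B))) (lin (pr A B) (q0 A B)) =
       lin (pr (pr A B) (pr A B)) (q1 (pr A B) (pr A B) \<bullet> q0 A B)" by (rule scll) (use A in simp_all)
    show "Dop (c_p0 Y A B) = c_comp Y (c_p1 Y (c_prod Y A B) (c_prod Y A B)) (c_p0 Y A B)"
      using A e by (simp add: Dop_def seq_post_def fun_eq_iff)
    have e: "sc (lin (pr (pr A B) (pr A B)) (q1 (pr A B) (pr A B))) (lin (pr A B) (q1 A B)) =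
       lin (pr (pr A B) (pr A B)) (q1 (pr A B) (pr A B) \<bullet> q1 A B)" by (rule scll) (use A in simp_all)
    show "Dop (c_p1 Y A B) = c_comp Y (c_p1 Y (c_prod Y A B) (c_prod Y A B)) (c_p1 Y A B)"
      using A e by (simp add: Dop_def seq_post_def fun_eq_iff)
  qed
  show "\<forall>A B E f g. f \<in> hom Y A B \<longrightarrow> g \<in> hom Y A E \<longrightarrow> Dop (c_pair Y f g) = c_pair Y (Dop f) (Dop g)"
    by (simp add: Dop_def)
  show "\<forall>A B E f g. f \<in> hom Y A B \<longrightarrow> g \<in> hom Y B E \<longrightarrow>
     Dop (c_comp Y f g) = c_comp Y (c_pair Y (c_comp Y (c_p0 Y A A) f) (Dop f)) (Dop g)"
    unfolding homY Ysel mem_Collect_eq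
  proof (intro allI impI)
    fix A B E f g assume f: "is_Dseq X A B f" and g: "is_Dseq X B E g"
    show "Dop (sc f g) = sc (\<lambda>n. pa (sc (lin (pr A A) (q0 A A)) f n) (Dop f n)) (Dop g)"
      by (simp only: Tpair[OF Dseq_sq[OF f]] D_sc)
  qed
  show "\<forall>A B f. f \<in> hom Y A B \<longrightarrow> c_comp Y (ell Y A) (Dop (Dop f)) = Dop f"
    unfolding homY mem_Collect_eq
  proof (intro allI impI)
    fix A B f assume f: "is_Dseq X A B f"
    have A: "A \<in> Ob" using Dseq_ob[OF f] by simp
    note c = cond0[OF f, unfolded conds_def]
    show "c_comp Y (ell Y A) (Dop (Dop f)) = Dop f" using A c by (simp add: ellY sc_lin_left)
  qed
  show "\<forall>A B f. f \<in> hom Y A B \<longrightarrow> c_comp Y (cmid Y A) (Dop (Dop f)) = Dop (Dop f)"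
    unfolding homY mem_Collect_eq
  proof (intro allI impI)
    fix A B f assume f: "is_Dseq X A B f"
    have A: "A \<in> Ob" using Dseq_ob[OF f] by simp
    note c = cond0[OF f, unfolded conds_def]
    show "c_comp Y (cmid Y A) (Dop (Dop f)) = Dop (Dop f)" using A c by (simp add: cmidY sc_lin_left)
  qed
qed

lemma main: "is_cartesian_differential (Dseq_cat X) Dop
    \<and> (\<forall>f \<in> c_arr (Dseq_cat X). Dop f = delta f 1)
    \<and> (\<forall>A B f. f \<in> hom (Dseq_cat X) A B \<longrightarrow>
         c_pair (Dseq_cat X) (c_comp (Dseq_cat X) (c_p0 (Dseq_cat X) A A) f) (Dop f) = Tseq X f)"
proof (intro conjI cdY ballI allI impI)
  fix f show "Dop f = delta f 1" by (simp add: delta_def funpow.simps(2))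
next
  fix A B f assume "f \<in> hom (Dseq_cat X) A B"
  then have f: "is_Dseq X A B f" by (simp add: homY)
  show "c_pair Y (c_comp Y (c_p0 Y A A) f) (Dop f) = Tseq X f"
    using Tpair[OF Dseq_sq[OF f]] by simp
qed

end

theorem corollary4p22:
  fixes X :: "('o, 'm) cat_data"
  assumes "is_cartesian_left_additive X"
  shows "is_cartesian_differential (Dseq_cat X) Dop
    \<and> (\<forall>f \<in> c_arr (Dseq_cat X). Dop f = delta f 1)
    \<and> (\<forall>A B f. f \<in> hom (Dseq_cat X) A B \<longrightarrow>
         c_pair (Dseq_cat X) (c_comp (Dseq_cat X) (c_p0 (Dseq_cat X) A A) f) (Dop f) = Tseq X f)"
  by (rule cla.main[OF cla.intro[OF assms]])

end
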